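(* Let $p>1$ and let $f\in C^2(\mathbb R)$ be homogeneous of degree $p$, with $F(s)=\int_0^sf$. Then the equation $$(1-c^2)\varphi+\beta\varphi''+\varphi''''-f(\varphi)=0$$ has no nonzero solution $\varphi\in H^2(\mathbb R)$ if either of the following holds: (i) $c^2\ge 1$ and $\beta<\dfrac{2\sqrt{(3p+5)(p-1)(c^2-1)}}{p+3}$; (ii) $F(u)\ge0$ for all $u\in\mathbb R$, $c^2\ge1$ and $\beta\ge0$.
   Context: A function $f$ is homogeneous of degree $p$ if $f(\lambda s)=\lambda^pf(s)$ for all $\lambda>0$ and $s\in\mathbb R$. *)

theory Defs
  imports "HOL-Analysis.Analysis"
begin

text \<open>Test functions (C-infinity with compact support) on the real line, given together
  with the sequence of all their derivatives: D 0 is the function, D k its k-th derivative.\<close>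
definition test_fun :: "(nat \<Rightarrow> real \<Rightarrow> real) \<Rightarrow> bool" where
  "test_fun D \<longleftrightarrow> (\<forall>k x. (D k has_real_derivative D (Suc k) x) (at x)) \<and> bounded {x. D 0 x \<noteq> 0}"

definition L2 :: "(real \<Rightarrow> real) \<Rightarrow> bool" where
  "L2 u \<longleftrightarrow> u \<in> borel_measurable lborel \<and> integrable lborel (\<lambda>x. (u x)\<^sup>2)"

definition weak_deriv :: "(real \<Rightarrow> real) \<Rightarrow> (real \<Rightarrow> real) \<Rightarrow> bool" where
  "weak_deriv u g \<longleftrightarrow> (\<forall>D. test_fun D \<longrightarrow>
      (LINT x|lborel. u x * D 1 x) = - (LINT x|lborel. g x * D 0 x))"

definition H2 :: "(real \<Rightarrow> real) \<Rightarrow> bool" where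
  "H2 u \<longleftrightarrow> (\<exists>u1 u2. L2 u \<and> L2 u1 \<and> L2 u2 \<and> weak_deriv u u1 \<and> weak_deriv u1 u2)"

text \<open>phi is a (distributional) solution of (1-c^2) phi + beta phi'' + phi'''' - f(phi) = 0:
  tested against every test function, after moving all derivatives onto the test function.\<close>
definition weak_solution :: "real \<Rightarrow> real \<Rightarrow> (real \<Rightarrow> real) \<Rightarrow> (real \<Rightarrow> real) \<Rightarrow> bool" where
  "weak_solution c \<beta> f \<phi> \<longleftrightarrow> (\<forall>D. test_fun D \<longrightarrow>
      integrable lborel (\<lambda>x. (1 - c\<^sup>2) * \<phi> x * D 0 x + \<beta> * \<phi> x * D 2 x + \<phi> x * D 4 x - f (\<phi> x) * D 0 x)
    \<and> (LINT x|lborel. (1 - c\<^sup>2) * \<phi> x * D 0 x + \<beta> * \<phi> x * D 2 x + \<phi> x * D 4 x - f (\<phi> x) * D 0 x) = 0)"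

definition homogeneous :: "real \<Rightarrow> (real \<Rightarrow> real) \<Rightarrow> bool" where
  "homogeneous p f \<longleftrightarrow> (\<forall>t>0. \<forall>s. f (t * s) = t powr p * f s)"

definition C2 :: "(real \<Rightarrow> real) \<Rightarrow> bool" where
  "C2 f \<longleftrightarrow> (\<exists>f1 f2. (\<forall>x. (f has_real_derivative f1 x) (at x)) \<and>
      (\<forall>x. (f1 has_real_derivative f2 x) (at x)) \<and> continuous_on UNIV f2)"

end

theory Submission
  imports Defs "HOL-Computational_Algebra.Polynomial"
begin

definition smooth :: "(nat \<Rightarrow> real \<Rightarrow> real) \<Rightarrow> bool" where
  "smooth D \<longleftrightarrow> (\<forall>k x. (D k has_real_derivative D (Suc k) x) (at x))"

lemma test_fun_iff: "test_fun D \<longleftrightarrow> smooth D \<and> bounded {x. D 0 x \<noteq> 0}"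
  by (simp add: test_fun_def smooth_def)

definition prim :: "real \<Rightarrow> (real \<Rightarrow> real) \<Rightarrow> real \<Rightarrow> real" where
  "prim a g x = (if a \<le> x then integral {a..x} g else - integral {x..a} g)"

lemma prim_eq:
  assumes "continuous_on UNIV g" "lo \<le> a" "lo \<le> x"
  shows "prim a g x = integral {lo..x} g - integral {lo..a} g"
proof -
  have int: "g integrable_on {u..v}" for u v
    using assms(1) by (meson continuous_on_subset integrable_continuous_real subset_UNIV)
  show ?thesis
  proof (cases "a \<le> x")
    case True
    then show ?thesis using Henstock_Kurzweil_Integration.integral_combine[OF assms(2) True int] by (simp add: prim_def)
  next
    case False
    then show ?thesis using Henstock_Kurzweil_Integration.integral_combine[OF assms(3) _ int, of a] by (simp add: prim_def)
  qed
qed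

lemma prim_deriv:
  assumes "continuous_on UNIV g"
  shows "(prim a g has_real_derivative g x) (at x)"
proof -
  define lo where "lo = min a x - 1"
  define hi where "hi = x + 1"
  have cg: "continuous_on {lo..hi} g" using assms continuous_on_subset by blast
  have d: "((\<lambda>y. integral {lo..y} g - integral {lo..a} g) has_real_derivative g x) (at x within {lo..hi})"
    using integral_has_real_derivative[OF cg, of x] unfolding lo_def hi_def
    by (auto intro!: derivative_eq_intros)
  have d2: "((\<lambda>y. integral {lo..y} g - integral {lo..a} g) has_real_derivative g x) (at x)"
    using d by (subst (asm) at_within_interior[of x]) (auto simp: lo_def hi_def)
  show ?thesis
  proof (rule has_field_derivative_transform_within_open[OF d2, of "{lo<..}"])
    show "integral {lo..y} g - integral {lo..a} g = prim a g y" if "y \<in> {lo<..}" for y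
      using that by (intro prim_eq[OF assms, symmetric]) (auto simp: lo_def)
  qed (auto simp: lo_def)
qed

lemma prim_cont: "continuous_on UNIV g \<Longrightarrow> continuous_on UNIV (prim a g)"
  by (meson DERIV_isCont continuous_at_imp_continuous_on prim_deriv)

lemma smooth_cont: "smooth D \<Longrightarrow> continuous_on UNIV (D k)"
  unfolding smooth_def by (meson DERIV_isCont continuous_at_imp_continuous_on)

lemma smooth_shift: "smooth D \<Longrightarrow> smooth (\<lambda>k. D (Suc k))"
  unfolding smooth_def by blast

lemma smooth_lin: "smooth D \<Longrightarrow> smooth E \<Longrightarrow> smooth (\<lambda>k x. a * D k x + b * E k x)"
  unfolding smooth_def by (auto intro!: derivative_eq_intros)

lemma smooth_aff: "smooth D \<Longrightarrow> smooth (\<lambda>k x. c ^ k * D k (c * x + d))"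
  unfolding smooth_def
proof (intro allI)
  fix k x assume D: "\<forall>k x. (D k has_real_derivative D (Suc k) x) (at x)"
  have "((\<lambda>x. D k (c * x + d)) has_real_derivative D (Suc k) (c * x + d) * c) (at x)"
    by (rule DERIV_chain2[OF D[rule_format]]) (auto intro!: derivative_eq_intros)
  then show "((\<lambda>x. c ^ k * D k (c * x + d)) has_real_derivative c ^ Suc k * D (Suc k) (c * x + d)) (at x)"
    by (auto intro!: derivative_eq_intros simp: algebra_simps)
qed

definition pmul :: "(nat \<Rightarrow> real \<Rightarrow> real) \<Rightarrow> (nat \<Rightarrow> real \<Rightarrow> real) \<Rightarrow> nat \<Rightarrow> real \<Rightarrow> real" where
  "pmul D E = (\<lambda>k x. \<Sum>j\<le>k. real (k choose j) * D j x * E (k - j) x)"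

lemma leibniz_step:
  fixes a b :: "nat \<Rightarrow> real"
  shows "(\<Sum>j\<le>k. real (k choose j) * (a (Suc j) * b (k - j) + a j * b (Suc (k - j))))
       = (\<Sum>j\<le>Suc k. real (Suc k choose j) * a j * b (Suc k - j))"
proof -
  have e1: "(\<Sum>j\<le>Suc k. real (k choose j) * a j * b (Suc k - j))
      = a 0 * b (Suc k) + (\<Sum>j\<le>k. real (k choose Suc j) * a (Suc j) * b (k - j))"
    by (subst sum.atMost_Suc_shift) simp
  have e2: "(\<Sum>j\<le>Suc k. real (k choose j) * a j * b (Suc k - j))
      = (\<Sum>j\<le>k. real (k choose j) * a j * b (Suc (k - j)))"
    by (simp add: Suc_diff_le)
  have "(\<Sum>j\<le>Suc k. real (Suc k choose j) * a j * b (Suc k - j))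
      = a 0 * b (Suc k) + (\<Sum>j\<le>k. real (Suc k choose Suc j) * a (Suc j) * b (k - j))"
    by (subst sum.atMost_Suc_shift) simp
  also have "\<dots> = a 0 * b (Suc k) + (\<Sum>j\<le>k. real (k choose Suc j) * a (Suc j) * b (k - j))
       + (\<Sum>j\<le>k. real (k choose j) * a (Suc j) * b (k - j))"
    by (simp add: algebra_simps sum.distrib)
  also have "\<dots> = (\<Sum>j\<le>k. real (k choose j) * a j * b (Suc (k - j)))
       + (\<Sum>j\<le>k. real (k choose j) * a (Suc j) * b (k - j))"
    using e1 e2 by simp
  also have "\<dots> = (\<Sum>j\<le>k. real (k choose j) * (a (Suc j) * b (k - j) + a j * b (Suc (k - j))))"
    by (simp add: algebra_simps sum.distrib)
  finally show ?thesis by simp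
qed

lemma smooth_mult: "smooth D \<Longrightarrow> smooth E \<Longrightarrow> smooth (pmul D E)"
  unfolding smooth_def
proof (intro allI)
  fix k x
  assume D: "\<forall>k x. (D k has_real_derivative D (Suc k) x) (at x)"
    and E: "\<forall>k x. (E k has_real_derivative E (Suc k) x) (at x)"
  have "((\<lambda>x. \<Sum>j\<le>k. real (k choose j) * D j x * E (k - j) x) has_real_derivative
      (\<Sum>j\<le>k. real (k choose j) * (D (Suc j) x * E (k - j) x + D j x * E (Suc (k - j)) x))) (at x)"
    by (rule DERIV_sum) (auto intro!: derivative_eq_intros D[rule_format] E[rule_format] simp: algebra_simps)
  then show "(pmul D E k has_real_derivative pmul D E (Suc k) x) (at x)"
    unfolding pmul_def using leibniz_step[of k "\<lambda>j. D j x" "\<lambda>j. E j x"] by simp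
qed

lemma pmul_0: "pmul D E 0 x = D 0 x * E 0 x"
  by (simp add: pmul_def)

fun pk :: "nat \<Rightarrow> real poly" where
  "pk 0 = 1"
| "pk (Suc k) = [:0,0,1:] * (pk k - pderiv (pk k))"

definition psi :: "nat \<Rightarrow> real \<Rightarrow> real" where
  "psi k x = (if x \<le> 0 then 0 else poly (pk k) (1/x) * exp (-1/x))"

lemma poly_exp_decay: "((\<lambda>y. poly q y * y ^ n * exp (- y)) \<longlongrightarrow> (0::real)) at_top"
proof (induction q arbitrary: n)
  case 0
  then show ?case by simp
next
  case (pCons a p)
  have "((\<lambda>y. a * (y ^ n / exp y) + poly p y * y ^ Suc n * exp (- y)) \<longlongrightarrow> a * 0 + 0) at_top"
    by (intro tendsto_intros tendsto_power_div_exp_0 pCons.IH)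
  then show ?case
    by (simp add: exp_minus field_simps)
qed

lemma psi_deriv: "(psi k has_real_derivative psi (Suc k) x) (at x)"
proof -
  consider "x < 0" | "x = 0" | "x > 0" by linarith
  then show ?thesis
  proof cases
    case 1
    have "(psi k has_real_derivative 0) (at x)"
      by (rule has_field_derivative_transform_within_open[OF DERIV_const[of 0 "at x"], of "{..<0}"])
         (use 1 in \<open>auto simp: psi_def\<close>)
    then show ?thesis using 1 by (simp add: psi_def)
  next
    case 3
    let ?q = "pk k"
    have "((\<lambda>x. poly ?q (1/x) * exp (-1/x)) has_real_derivative
       poly (pderiv ?q) (1/x) * (- 1 / x^2) * exp (-1/x) + poly ?q (1/x) * (exp (-1/x) * (1 / x^2))) (at x)"
      using 3
      by (auto intro!: derivative_eq_intros DERIV_chain2[OF poly_DERIV] simp: power2_eq_square field_simps)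
    also have "poly (pderiv ?q) (1/x) * (- 1 / x^2) * exp (-1/x) + poly ?q (1/x) * (exp (-1/x) * (1 / x^2))
        = psi (Suc k) x"
      using 3 by (simp add: psi_def algebra_simps power2_eq_square)
    finally have d: "((\<lambda>x. poly ?q (1/x) * exp (-1/x)) has_real_derivative psi (Suc k) x) (at x)" .
    show ?thesis
      by (rule has_field_derivative_transform_within_open[OF d, of "{0<..}"])
         (use 3 in \<open>auto simp: psi_def\<close>)
  next
    case 2
    have r: "((\<lambda>y. psi k y / y) \<longlongrightarrow> 0) (at_right 0)"
    proof -
      have lim: "((\<lambda>y. poly (pk k) y * y ^ 1 * exp (- y)) \<longlongrightarrow> 0) at_top"
        by (rule poly_exp_decay)
      have "((\<lambda>y. poly (pk k) (inverse y) * (inverse y) ^ 1 * exp (- inverse y)) \<longlongrightarrow> 0) (at_right 0)"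
        by (rule filterlim_compose[OF lim filterlim_inverse_at_top_right])
      then show ?thesis
        apply (rule Lim_transform_eventually)
        apply (simp add: eventually_at_right_less[of 0] eventually_mono)
        apply (rule eventually_mono[OF eventually_at_right_less])
        apply (simp add: psi_def field_simps)
        done
    qed
    have l: "((\<lambda>y. psi k y / y) \<longlongrightarrow> 0) (at_left 0)"
      apply (rule Lim_transform_eventually[OF tendsto_const[of 0]])
      using eventually_at_left_real[where a=0 and b="-1"] by (rule eventually_mono) (auto simp: psi_def)
    have "((\<lambda>y. (psi k y - psi k 0) / (y - 0)) \<longlongrightarrow> 0) (at 0)"
      using r l by (simp add: filterlim_at_split psi_def)
    then show ?thesis
      using 2 by (simp add: has_field_derivative_iff psi_def)
  qed
qed

lemma smooth_psi: "smooth psi"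
  unfolding smooth_def using psi_deriv by blast

lemma psi0_pos: "x > 0 \<Longrightarrow> psi 0 x > 0"
  by (simp add: psi_def)

lemma psi0_nonneg: "psi 0 x \<ge> 0"
  by (simp add: psi_def)

definition tf :: "(nat \<Rightarrow> real \<Rightarrow> real) \<Rightarrow> real \<Rightarrow> bool" where
  "tf D M \<longleftrightarrow> smooth D \<and> (\<forall>k x. M < \<bar>x\<bar> \<longrightarrow> D k x = 0)"

lemma supp_all:
  assumes "smooth D" "\<And>x. M < \<bar>x\<bar> \<Longrightarrow> D 0 x = 0"
  shows "tf D M"
  unfolding tf_def
proof (intro conjI assms allI impI)
  fix k x assume "M < \<bar>x\<bar>"
  then show "D k x = 0"
  proof (induction k arbitrary: x)
    case 0 then show ?case using assms by simp
  next
    case (Suc k)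
    define S where "S = {y. M < \<bar>y\<bar>}"
    have oS: "open S" unfolding S_def by (intro open_Collect_less continuous_intros)
    have "((\<lambda>_. 0) has_real_derivative D (Suc k) x) (at x)"
      by (rule has_field_derivative_transform_within_open[OF _ oS, of "D k"])
         (use assms(1) Suc in \<open>auto simp: smooth_def S_def\<close>)
    then show ?case using DERIV_const DERIV_unique by blast
  qed
qed

lemma tf_test: "tf D M \<Longrightarrow> test_fun D"
  unfolding tf_def test_fun_iff bounded_iff
  by (metis (mono_tags, lifting) linorder_not_le mem_Collect_eq real_norm_def)

lemma test_tf: "test_fun D \<Longrightarrow> \<exists>M>0. tf D M"
proof -
  assume t: "test_fun D"
  then obtain B where B: "\<And>x. D 0 x \<noteq> 0 \<Longrightarrow> \<bar>x\<bar> \<le> B"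
    unfolding test_fun_iff bounded_iff by auto
  have "tf D (max B 1)"
    by (rule supp_all) (use t B in \<open>auto simp: test_fun_iff\<close>, force)
  then show ?thesis by (intro exI[of _ "max B 1"]) auto
qed

lemma tf_shift: "tf D M \<Longrightarrow> tf (\<lambda>k. D (Suc k)) M"
  unfolding tf_def using smooth_shift by blast

lemma tf_pmul: "tf D M \<Longrightarrow> smooth E \<Longrightarrow> tf (pmul D E) M"
  by (rule supp_all) (auto simp: tf_def smooth_mult pmul_0)

lemma tf_lin: "tf D M \<Longrightarrow> tf E M \<Longrightarrow> tf (\<lambda>k x. a * D k x + b * E k x) M"
  unfolding tf_def using smooth_lin by auto

lemma tf_mono: "tf D M \<Longrightarrow> M \<le> M' \<Longrightarrow> tf D M'"
  unfolding tf_def by auto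

definition th :: "nat \<Rightarrow> real \<Rightarrow> real" where
  "th = pmul (\<lambda>k x. 1 ^ k * psi k (1 * x + 1)) (\<lambda>k x. (-1) ^ k * psi k ((-1) * x + 1))"

lemma smooth_th: "smooth th"
  unfolding th_def by (intro smooth_mult smooth_aff smooth_psi)

lemma th0: "th 0 x = psi 0 (x + 1) * psi 0 (1 - x)"
  by (simp add: th_def pmul_0)

lemma th0_nonneg: "th 0 x \<ge> 0"
  by (simp add: th0 psi0_nonneg)

lemma th0_pos: "\<bar>x\<bar> < 1 \<Longrightarrow> th 0 x > 0"
  by (simp add: th0 psi0_pos)

lemma th0_zero: "1 \<le> \<bar>x\<bar> \<Longrightarrow> th 0 x = 0"
  by (auto simp: th0 psi_def)

lemma tf_th: "tf th 1"
  by (rule supp_all[OF smooth_th]) (simp add: th0_zero)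

definition Th :: "real \<Rightarrow> real" where "Th = prim (-1) (th 0)"

lemma Th_deriv: "(Th has_real_derivative th 0 x) (at x)"
  unfolding Th_def by (rule prim_deriv[OF smooth_cont[OF smooth_th]])


lemma Th_low: "x \<le> -1 \<Longrightarrow> Th x = 0"
proof -
  assume x: "x \<le> -1"
  have "integral {x..-1} (th 0) = integral {x..-1} (\<lambda>_. 0)"
    by (rule integral_cong) (auto simp: th0_zero)
  then show ?thesis using x by (simp add: Th_def prim_def)
qed

lemma Th_cont: "continuous_on S Th"
  by (meson DERIV_isCont Th_deriv continuous_at_imp_continuous_on)

lemma Th_mono: "x \<le> y \<Longrightarrow> Th x \<le> Th y"
  by (rule DERIV_nonneg_imp_increasing_open[of x y Th]) (use Th_deriv th0_nonneg Th_cont in auto)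

lemma Th_const: "1 \<le> x \<Longrightarrow> Th x = Th 1"
proof -
  assume x: "1 \<le> x"
  have d: "(Th has_real_derivative 0) (at y)" if "1 < y" for y
    using Th_deriv[of y] th0_zero[of y] that by simp
  show ?thesis
  proof (cases "x = 1")
    case False
    then show ?thesis using DERIV_isconst2[of 1 x Th x, OF _ Th_cont d] x by simp
  qed simp
qed

lemma Th1_pos: "Th 1 > 0"
proof -
  have "Th (-1) < Th 1"
  proof (rule DERIV_pos_imp_increasing_open[of "-1" 1 Th, OF _ _ Th_cont])
    fix x :: real assume "-1 < x" "x < 1"
    then show "\<exists>y. (Th has_real_derivative y) (at x) \<and> y > 0"
      using Th_deriv[of x] th0_pos[of x] by (intro exI[of _ "th 0 x"]) auto
  qed simp
  then show ?thesis using Th_low by simp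
qed

definition St :: "nat \<Rightarrow> real \<Rightarrow> real" where
  "St k x = (if k = 0 then Th x / Th 1 else th (k - 1) x / Th 1)"

lemma smooth_St: "smooth St"
  unfolding smooth_def
proof (intro allI)
  fix k x
  show "(St k has_real_derivative St (Suc k) x) (at x)"
  proof (cases k)
    case 0
    have "((\<lambda>x. Th x / Th 1) has_real_derivative th 0 x / Th 1) (at x)"
      using Th_deriv[of x] by (rule DERIV_cdivide)
    moreover have "St 0 = (\<lambda>x. Th x / Th 1)" by (simp add: St_def fun_eq_iff)
    ultimately show ?thesis using 0 by (simp add: St_def)
  next
    case (Suc j)
    have "((\<lambda>x. th j x / Th 1) has_real_derivative th (Suc j) x / Th 1) (at x)"
      using smooth_th unfolding smooth_def by (intro DERIV_cdivide) blast
    moreover have "St (Suc j) = (\<lambda>x. th j x / Th 1)" by (simp add: St_def fun_eq_iff)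
    ultimately show ?thesis using Suc by (simp add: St_def)
  qed
qed

lemma St0_low: "x \<le> -1 \<Longrightarrow> St 0 x = 0"
  by (simp add: St_def Th_low)

lemma St0_high: "1 \<le> x \<Longrightarrow> St 0 x = 1"
proof -
  assume "1 \<le> x"
  then have "Th x = Th 1" by (rule Th_const)
  then show ?thesis using Th1_pos by (simp add: St_def)
qed

lemma St0_range: "0 \<le> St 0 x \<and> St 0 x \<le> 1"
proof -
  have "Th (min x (-1)) \<le> Th x" "Th x \<le> Th (max x 1)" by (auto intro!: Th_mono)
  moreover have "Th (min x (-1)) = 0" by (simp add: Th_low)
  moreover have "Th (max x 1) = Th 1" by (rule Th_const) simp
  ultimately show ?thesis using Th1_pos by (simp add: St_def divide_le_eq_1)
qed

definition loc_int :: "(real \<Rightarrow> real) \<Rightarrow> bool" where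
  "loc_int h \<longleftrightarrow> h \<in> borel_measurable borel \<and> (\<forall>a b. set_integrable lborel {a..b} h)"

lemma loc_int_integrable_on: "loc_int h \<Longrightarrow> h integrable_on {a..b}"
  unfolding loc_int_def using set_borel_integral_eq_integral(1) by blast

lemma loc_int_integral: "loc_int h \<Longrightarrow> (LINT x:{a..b}|lborel. h x) = integral {a..b} h"
  unfolding loc_int_def using set_borel_integral_eq_integral(2) by blast

lemma cont_loc_int: "continuous_on UNIV h \<Longrightarrow> loc_int h"
  unfolding loc_int_def
  by (auto intro: borel_integrable_atLeastAtMost' continuous_on_subset borel_measurable_continuous_onI)

lemma L2_loc_int:
  assumes "L2 u" shows "loc_int u"
  unfolding loc_int_def
proof (intro conjI allI)
  show m: "u \<in> borel_measurable borel" using assms by (simp add: L2_def)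
  fix a b :: real
  have i1: "integrable lborel (\<lambda>x. indicator {a..b} x * (1::real))"
    using borel_integrable_atLeastAtMost'[of a b "\<lambda>_. 1::real"] by (simp add: set_integrable_def)
  have i2: "integrable lborel (\<lambda>x. (u x)\<^sup>2)" using assms by (simp add: L2_def)
  show "set_integrable lborel {a..b} u"
    unfolding set_integrable_def
  proof (rule Bochner_Integration.integrable_bound[OF Bochner_Integration.integrable_add[OF i1 i2]])
    show "(\<lambda>x. indicator {a..b} x *\<^sub>R u x) \<in> borel_measurable lborel" using m by simp
    show "AE x in lborel. norm (indicator {a..b} x *\<^sub>R u x) \<le> norm (indicator {a..b} x * 1 + (u x)\<^sup>2)"
    proof (rule AE_I2)
      fix x
      have "\<bar>u x\<bar> \<le> 1 + (u x)\<^sup>2"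
      proof (cases "\<bar>u x\<bar> \<le> 1")
        case True then show ?thesis by (smt (verit) zero_le_power2)
      next
        case False
        then have "\<bar>u x\<bar> * 1 \<le> \<bar>u x\<bar> * \<bar>u x\<bar>" by (intro mult_left_mono) auto
        then show ?thesis by (simp add: power2_eq_square abs_mult_self_eq)
      qed
      then show "norm (indicator {a..b} x *\<^sub>R u x) \<le> norm (indicator {a..b} x * 1 + (u x)\<^sup>2)"
        by (auto simp: indicator_def)
    qed
  qed
qed

lemma loc_int_add: "loc_int f \<Longrightarrow> loc_int g \<Longrightarrow> loc_int (\<lambda>x. a * f x + b * g x)"
  unfolding loc_int_def set_integrable_def
  by (auto intro!: Bochner_Integration.integrable_add integrable_mult_right simp: algebra_simps)

lemma prim_eq':
  assumes "loc_int g" "lo \<le> a" "lo \<le> x"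
  shows "prim a g x = integral {lo..x} g - integral {lo..a} g"
proof -
  have int: "g integrable_on {u..v}" for u v
    using assms(1) by (rule loc_int_integrable_on)
  show ?thesis
  proof (cases "a \<le> x")
    case True
    then show ?thesis using Henstock_Kurzweil_Integration.integral_combine[OF assms(2) True int] by (simp add: prim_def)
  next
    case False
    then show ?thesis using Henstock_Kurzweil_Integration.integral_combine[OF assms(3) _ int, of a] by (simp add: prim_def)
  qed
qed

lemma prim_shift: "loc_int g \<Longrightarrow> prim a g x = prim b g x + prim a g b"
proof -
  assume g: "loc_int g"
  let ?lo = "min (min a b) x"
  show ?thesis
    using prim_eq'[OF g, of ?lo a x] prim_eq'[OF g, of ?lo b x] prim_eq'[OF g, of ?lo a b] by simp
qed

lemma prim_cont_loc:
  assumes "loc_int g" shows "continuous_on UNIV (prim a g)"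
proof -
  have "isCont (prim a g) x" for x
  proof -
    define lo where "lo = min a x - 1"
    define hi where "hi = x + 1"
    have c: "continuous_on {lo..hi} (\<lambda>y. integral {lo..y} g)"
      by (rule indefinite_integral_continuous_1[OF loc_int_integrable_on[OF assms]])
    then have c2: "continuous_on {lo<..<hi} (\<lambda>y. integral {lo..y} g - integral {lo..a} g)"
      by (auto intro!: continuous_intros continuous_on_subset[OF c])
    have c3: "continuous_on {lo<..<hi} (prim a g)"
      using c2 by (rule continuous_on_cong[THEN iffD1, rotated 2])
         (auto simp: lo_def intro!: prim_eq'[OF assms, symmetric])
    show ?thesis
      by (rule continuous_on_interior[OF c3]) (auto simp: lo_def hi_def)
  qed
  then show ?thesis by (simp add: continuous_at_imp_continuous_on)
qed

lemma tf_bounded: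
  assumes "tf D M" shows "\<exists>B. \<forall>x. \<bar>D k x\<bar> \<le> B"
proof -
  have "compact (D k ` {-M..M})"
    using assms by (intro compact_continuous_image continuous_on_subset[OF smooth_cont]) (auto simp: tf_def)
  then obtain B where B: "\<And>y. y \<in> D k ` {-M..M} \<Longrightarrow> \<bar>y\<bar> \<le> B"
    using compact_imp_bounded bounded_iff by (metis real_norm_def)
  have "\<bar>D k x\<bar> \<le> max B 0" for x
  proof (cases "\<bar>x\<bar> \<le> M")
    case True then show ?thesis using B[of "D k x"] by fastforce
  next
    case False then show ?thesis using assms by (simp add: tf_def)
  qed
  then show ?thesis by blast
qed

lemma tf_zero: "tf D M \<Longrightarrow> M < \<bar>x\<bar> \<Longrightarrow> D k x = 0"
  by (simp add: tf_def)

lemma tf_meas: "tf D M \<Longrightarrow> D k \<in> borel_measurable borel"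
  unfolding tf_def by (intro borel_measurable_continuous_onI smooth_cont) auto

lemma integrable_test:
  assumes h: "loc_int h" and D: "tf D M"
  shows "integrable lborel (\<lambda>x. h x * D k x)"
proof -
  obtain B where B: "\<And>x. \<bar>D k x\<bar> \<le> B" using tf_bounded[OF D] by blast
  have i: "integrable lborel (\<lambda>x. indicator {-M..M} x *\<^sub>R h x)"
    using h by (simp add: loc_int_def set_integrable_def)
  show ?thesis
  proof (rule Bochner_Integration.integrable_bound[OF integrable_mult_right[OF integrable_norm[OF i], of B]])
    show "(\<lambda>x. h x * D k x) \<in> borel_measurable lborel"
      using h tf_meas[OF D, of k] by (simp add: loc_int_def borel_measurable_times)
    show "AE x in lborel. norm (h x * D k x) \<le> norm (B * norm (indicator {-M..M} x *\<^sub>R h x))"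
    proof (rule AE_I2)
      fix x
      show "norm (h x * D k x) \<le> norm (B * norm (indicator {-M..M} x *\<^sub>R h x))"
      proof (cases "\<bar>x\<bar> \<le> M")
        case True
        then have "\<bar>h x * D k x\<bar> \<le> \<bar>h x\<bar> * B" using B[of x] by (simp add: abs_mult mult_left_mono)
        then show ?thesis using True B[of x] by (auto simp: indicator_def abs_mult algebra_simps)
      next
        case False then show ?thesis using tf_zero[OF D, of x k] by simp
      qed
    qed
  qed
qed

lemma integral_D1_zero:
  assumes D: "tf D M" shows "(LINT x|lborel. D (Suc k) x) = 0"
proof -
  define N where "N = \<bar>M\<bar> + 1"
  have z: "\<And>x j. N \<le> \<bar>x\<bar> \<Longrightarrow> D j x = 0" using D by (auto simp: tf_def N_def)
  have "(LINT x|lborel. indicator {-N..N} x *\<^sub>R D (Suc k) x) = D k N - D k (-N)"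
    using D unfolding tf_def smooth_def
    by (intro integral_FTC_atLeastAtMost)
       (auto simp: N_def has_real_derivative_iff_has_vector_derivative[symmetric]
             intro: has_field_derivative_at_within smooth_cont[unfolded smooth_def] continuous_on_subset)
  also have "\<dots> = 0" using z[of N k] z[of "-N" k] by (simp add: N_def)
  also have "(LINT x|lborel. indicator {-N..N} x *\<^sub>R D (Suc k) x) = (LINT x|lborel. D (Suc k) x)"
  proof (rule Bochner_Integration.integral_cong)
    fix x show "indicator {-N..N} x *\<^sub>R D (Suc k) x = D (Suc k) x"
      using z[of x "Suc k"] by (cases "N \<le> \<bar>x\<bar>") (auto simp: indicator_def)
  qed simp
  finally show ?thesis .
qed

lemma ibp_main:
  assumes h: "loc_int h" and D: "tf D M" and N: "\<And>x j. N \<le> \<bar>x\<bar> \<Longrightarrow> D j x = 0" and N0: "0 < N"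
  shows "(LINT x|lborel. prim (-N) h x * D (Suc 0) x) = - (LINT x|lborel. h x * D 0 x)"
proof -
  let ?I = "indicator {-N..N} :: real \<Rightarrow> real"
  define F where "F = (\<lambda>x t. D (Suc 0) x * (?I t * h t) * (if t \<le> x then 1 else 0::real))"
  define G where "G = (\<lambda>x t. \<bar>D (Suc 0) x\<bar> * \<bar>?I t * h t\<bar>)"
  have hm[measurable]: "h \<in> borel_measurable borel" using h by (simp add: loc_int_def)
  have Dm[measurable]: "D j \<in> borel_measurable borel" for j using tf_meas[OF D] .
  have ih: "integrable lborel (\<lambda>t. ?I t * h t)"
    using h by (simp add: loc_int_def set_integrable_def)
  have iD: "integrable lborel (\<lambda>x. D j x)" for j
    using integrable_test[OF cont_loc_int[of "\<lambda>_. 1"] D, of j] by simp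
  have Gm: "(\<lambda>(x, t). G x t) \<in> borel_measurable (lborel \<Otimes>\<^sub>M lborel)"
    unfolding G_def by measurable
  have Fm: "(\<lambda>(x, t). F x t) \<in> borel_measurable (lborel \<Otimes>\<^sub>M lborel)"
    unfolding F_def by measurable
  have iG: "integrable (lborel \<Otimes>\<^sub>M lborel) (\<lambda>(x, t). G x t)"
  proof (rule lborel_pair.Fubini_integrable[OF Gm])
    show "integrable lborel (\<lambda>x. LINT y|lborel. norm (case (x, y) of (x, t) \<Rightarrow> G x t))"
      unfolding G_def using integrable_mult_left[OF integrable_abs[OF iD[of "Suc 0"]], of "LINT y|lborel. \<bar>?I y * h y\<bar>"]
      by (simp add: abs_mult)
    show "AE x in lborel. integrable lborel (\<lambda>y. case (x, y) of (x, t) \<Rightarrow> G x t)"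
      unfolding G_def by (auto intro!: integrable_mult_right integrable_abs[OF ih])
  qed
  have iF: "integrable (lborel \<Otimes>\<^sub>M lborel) (\<lambda>(x, t). F x t)"
    by (rule Bochner_Integration.integrable_bound[OF iG Fm]) (auto simp: F_def G_def abs_mult)
  have inner1: "(LINT t|lborel. F x t) = prim (-N) h x * D (Suc 0) x" for x
  proof (cases "N \<le> \<bar>x\<bar>")
    case True then show ?thesis by (simp add: F_def N)
  next
    case False
    have "(LINT t|lborel. F x t) = D (Suc 0) x * (LINT t|lborel. indicator {-N..x} t *\<^sub>R h t)"
      unfolding F_def
      by (subst integral_mult_right_zero[symmetric], rule Bochner_Integration.integral_cong)
         (use False in \<open>auto simp: indicator_def\<close>)
    also have "(LINT t|lborel. indicator {-N..x} t *\<^sub>R h t) = integral {-N..x} h"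
      using loc_int_integral[OF h, of "-N" x] by (simp add: set_lebesgue_integral_def)
    also have "integral {-N..x} h = prim (-N) h x"
      using False by (simp add: prim_def)
    finally show ?thesis by simp
  qed
  have inner2: "(LINT x|lborel. F x t) = - (h t * D 0 t)" for t
  proof (cases "N \<le> \<bar>t\<bar> \<and> \<bar>t\<bar> \<noteq> N")
    case True then show ?thesis by (auto simp: F_def N indicator_def)
  next
    case False
    then have tN: "-N \<le> t" "t \<le> N" by auto
    have "(LINT x|lborel. F x t) = h t * (LINT x|lborel. indicator {t..N} x *\<^sub>R D (Suc 0) x)"
      unfolding F_def
    proof (subst integral_mult_right_zero[symmetric], rule Bochner_Integration.integral_cong)
      fix x show "D (Suc 0) x * (?I t * h t) * (if t \<le> x then 1 else 0) = h t * (indicator {t..N} x *\<^sub>R D (Suc 0) x)"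
        using tN N[of x "Suc 0"] by (cases "N \<le> \<bar>x\<bar>") (auto simp: indicator_def)
    qed simp
    also have "(LINT x|lborel. indicator {t..N} x *\<^sub>R D (Suc 0) x) = D 0 N - D 0 t"
      using D tN unfolding tf_def smooth_def
      by (intro integral_FTC_atLeastAtMost)
         (auto simp: has_real_derivative_iff_has_vector_derivative[symmetric]
             intro: has_field_derivative_at_within smooth_cont[unfolded smooth_def] continuous_on_subset)
    finally show ?thesis using N[of N 0] N0 by simp
  qed
  have "(LINT x|lborel. prim (-N) h x * D (Suc 0) x) = (LINT x|lborel. LINT t|lborel. F x t)"
    by (simp add: inner1)
  also have "\<dots> = integral\<^sup>L (lborel \<Otimes>\<^sub>M lborel) (\<lambda>(x, t). F x t)"
    by (rule lborel_pair.integral_fst[OF iF])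
  also have "\<dots> = (LINT t|lborel. LINT x|lborel. F x t)"
    by (rule lborel_pair.integral_snd[OF iF, symmetric])
  also have "\<dots> = - (LINT x|lborel. h x * D 0 x)"
    by (simp add: inner2)
  finally show ?thesis .
qed

lemma ibp_prim:
  assumes h: "loc_int h" and D: "tf D M"
  shows "(LINT x|lborel. prim a h x * D (Suc 0) x) = - (LINT x|lborel. h x * D 0 x)"
proof -
  define N where "N = \<bar>M\<bar> + 1"
  have N: "\<And>x j. N \<le> \<bar>x\<bar> \<Longrightarrow> D j x = 0" "N > 0" using D by (auto simp: tf_def N_def)
  define c where "c = prim a h (-N)"
  have e: "prim a h x * D (Suc 0) x = prim (-N) h x * D (Suc 0) x + c * D (Suc 0) x" for x
    using prim_shift[OF h, of a x "-N"] by (simp add: c_def algebra_simps)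
  have i1: "integrable lborel (\<lambda>x. prim (-N) h x * D (Suc 0) x)"
    by (rule integrable_test[OF cont_loc_int[OF prim_cont_loc[OF h]] D])
  have i2: "integrable lborel (\<lambda>x. c * D (Suc 0) x)"
    using integrable_test[OF cont_loc_int[of "\<lambda>_. c"] D, of "Suc 0"] by simp
  have "(LINT x|lborel. prim a h x * D (Suc 0) x) = (LINT x|lborel. prim (-N) h x * D (Suc 0) x) + (LINT x|lborel. c * D (Suc 0) x)"
    unfolding e by (rule Bochner_Integration.integral_add[OF i1 i2])
  also have "(LINT x|lborel. c * D (Suc 0) x) = 0"
    using integral_D1_zero[OF D, of 0] by simp
  finally show ?thesis using ibp_main[OF h D N] by simp
qed

definition pl :: "real \<Rightarrow> real \<Rightarrow> real \<Rightarrow> nat \<Rightarrow> real \<Rightarrow> real" where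
  "pl n a b = pmul (\<lambda>k x. n ^ k * St k (n * x + (- n * a - 1))) (\<lambda>k x. (- n) ^ k * St k ((- n) * x + (n * b - 1)))"

lemma pl0: "pl n a b 0 x = St 0 (n * x + (- n * a - 1)) * St 0 ((- n) * x + (n * b - 1))"
  by (simp add: pl_def pmul_0)

lemma pl_out: "n \<ge> 0 \<Longrightarrow> x \<le> a \<or> b \<le> x \<Longrightarrow> pl n a b 0 x = 0"
proof -
  assume n: "n \<ge> 0" and x: "x \<le> a \<or> b \<le> x"
  show ?thesis
  proof (cases "x \<le> a")
    case True
    have "n * x \<le> n * a" using n True by (simp add: mult_left_mono)
    then show ?thesis by (simp add: pl0 St0_low)
  next
    case False
    then have "b \<le> x" using x by auto
    then have "n * b \<le> n * x" using n by (simp add: mult_left_mono)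
    then show ?thesis by (simp add: pl0 St0_low)
  qed
qed

lemma tf_pl: assumes n: "n \<ge> 0" shows "tf (pl n a b) (max \<bar>a\<bar> \<bar>b\<bar>)"
proof (rule supp_all)
  show "smooth (pl n a b)" unfolding pl_def by (intro smooth_mult smooth_aff smooth_St)
  fix x assume x: "max \<bar>a\<bar> \<bar>b\<bar> < \<bar>x\<bar>"
  then have "x \<le> a \<or> b \<le> x" by (auto simp: abs_if split: if_splits)
  then show "pl n a b 0 x = 0" using pl_out[OF n] by blast
qed

lemma pl_range: "0 \<le> pl n a b 0 x \<and> pl n a b 0 x \<le> 1"
  using St0_range[of "n * x + (- n * a - 1)"] St0_range[of "(- n) * x + (n * b - 1)"]
  by (simp add: pl0 mult_le_one)

lemma pl_lim:
  assumes "a < x" "x < b"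
  shows "(\<lambda>i. pl (real (Suc i)) a b 0 x) \<longlonglongrightarrow> 1"
proof -
  obtain N :: nat where N: "2 / min (x - a) (b - x) < real N" using reals_Archimedean2 by blast
  have "eventually (\<lambda>i. pl (real (Suc i)) a b 0 x = 1) sequentially"
    unfolding eventually_sequentially
  proof (intro exI allI impI)
    fix i assume "N \<le> i"
    then have i: "2 / min (x - a) (b - x) < real (Suc i)" using N by linarith
    have m: "min (x - a) (b - x) > 0" using assms by auto
    then have i2: "2 < real (Suc i) * min (x - a) (b - x)" using i by (simp add: field_simps)
    have "2 \<le> real (Suc i) * (x - a)" "2 \<le> real (Suc i) * (b - x)"
      using i2 by (smt (verit) min.cobounded1 min.cobounded2 mult_left_mono of_nat_0_le_iff)+
    then show "pl (real (Suc i)) a b 0 x = 1"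
      by (simp add: pl0 St0_high algebra_simps)
  qed
  then show ?thesis by (rule tendsto_eventually)
qed

lemma interval_zero:
  assumes w: "loc_int w" and T: "\<forall>D. test_fun D \<longrightarrow> (LINT x|lborel. w x * D 0 x) = 0"
  shows "(LINT x|lborel. w x * indicator {a<..<b} x) = 0"
proof -
  let ?s = "\<lambda>i x. w x * pl (real (Suc i)) a b 0 x"
  have wm[measurable]: "w \<in> borel_measurable borel" using w by (simp add: loc_int_def)
  have plm[measurable]: "pl (real (Suc i)) a b 0 \<in> borel_measurable borel" for i
    using tf_meas[OF tf_pl] by simp
  have iw: "integrable lborel (\<lambda>x. norm (indicator {a..b} x *\<^sub>R w x))"
    using w by (simp add: loc_int_def set_integrable_def)
  have "(\<lambda>i. LINT x|lborel. ?s i x) \<longlonglongrightarrow> (LINT x|lborel. w x * indicator {a<..<b} x)"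
  proof (rule integral_dominated_convergence[OF _ _ iw])
    show "(\<lambda>x. w x * indicator {a<..<b} x) \<in> borel_measurable lborel" by measurable
    show "?s i \<in> borel_measurable lborel" for i by measurable
    show "AE x in lborel. (\<lambda>i. ?s i x) \<longlonglongrightarrow> w x * indicator {a<..<b} x"
    proof (rule AE_I2)
      fix x show "(\<lambda>i. ?s i x) \<longlonglongrightarrow> w x * indicator {a<..<b} x"
      proof (cases "a < x \<and> x < b")
        case True
        then show ?thesis using tendsto_mult[OF tendsto_const[of "w x"] pl_lim[of a x b]] by simp
      next
        case False
        then show ?thesis using pl_out[of "real (Suc _)" x a b] by (auto simp: indicator_def not_less)
      qed
    qed
    show "AE x in lborel. norm (?s i x) \<le> norm (indicator {a..b} x *\<^sub>R w x)" for i
    proof (rule AE_I2)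
      fix x
      show "norm (?s i x) \<le> norm (indicator {a..b} x *\<^sub>R w x)"
      proof (cases "a < x \<and> x < b")
        case True
        have "\<bar>pl (real (Suc i)) a b 0 x\<bar> \<le> 1" using pl_range[of "real (Suc i)" a b x] by simp
        then have "\<bar>w x\<bar> * \<bar>pl (real (Suc i)) a b 0 x\<bar> \<le> \<bar>w x\<bar>" by (simp add: mult_left_le)
        then show ?thesis using True by (simp add: abs_mult indicator_def)
      next
        case False
        then show ?thesis using pl_out[of "real (Suc i)" x a b] by (auto simp: not_less)
      qed
    qed
  qed
  moreover have "(LINT x|lborel. ?s i x) = 0" for i
    using T tf_test[OF tf_pl[of "real (Suc i)" a b]] by simp
  ultimately show ?thesis using LIMSEQ_unique[OF _ tendsto_const[of 0]] by simp
qed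

lemma interval_zero_Ioc:
  assumes w: "loc_int w" and T: "\<forall>D. test_fun D \<longrightarrow> (LINT x|lborel. w x * D 0 x) = 0"
  shows "(LINT x|lborel. w x * indicator {a<..b} x) = 0"
proof (cases "a < b")
  case True
  have "(LINT x|lborel. w x * indicator {a<..b} x) = (LINT x|lborel. w x * indicator {a<..<b} x)"
  proof (rule integral_cong_AE)
    show "(\<lambda>x. w x * indicator {a<..b} x) \<in> borel_measurable lborel"
      "(\<lambda>x. w x * indicator {a<..<b} x) \<in> borel_measurable lborel"
      using w by (auto simp: loc_int_def)
    show "AE x in lborel. w x * indicator {a<..b} x = w x * indicator {a<..<b} x"
      using AE_lborel_singleton[of b] by (rule AE_mp) (auto simp: indicator_def)
  qed
  then show ?thesis using interval_zero[OF w T] by simp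
qed simp

lemma Ioc_Int_stable: "Int_stable (range (\<lambda>(a, b). {a<..b::real}))"
  unfolding Int_stable_def
proof (intro ballI)
  fix A B assume "A \<in> range (\<lambda>(a, b). {a<..b::real})" "B \<in> range (\<lambda>(a, b). {a<..b::real})"
  then obtain a b c d where AB: "A = {a<..b}" "B = {c<..d}" by auto
  have "{a<..b} \<inter> {c<..d} = {max a c<..min b d}" by auto
  then show "A \<inter> B \<in> range (\<lambda>(a, b). {a<..b::real})" unfolding AB by auto
qed

lemma fund_lemma:
  assumes w: "loc_int w" and T: "\<forall>D. test_fun D \<longrightarrow> (LINT x|lborel. w x * D 0 x) = 0"
  shows "AE x in lborel. w x = 0"
proof -
  define wp where "wp x = max (w x) 0" for x
  define wn where "wn x = max (- w x) 0" for x
  have wm[measurable]: "w \<in> borel_measurable borel" using w by (simp add: loc_int_def)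
  have [measurable]: "wp \<in> borel_measurable borel" "wn \<in> borel_measurable borel"
    unfolding wp_def wn_def by measurable
  have ib: "integrable lborel (\<lambda>x. indicator {a..b} x *\<^sub>R w x)" for a b
    using w by (simp add: loc_int_def set_integrable_def)
  have ip: "integrable lborel (\<lambda>x. wp x * indicator {a<..b} x)" for a b
    by (rule Bochner_Integration.integrable_bound[OF ib[of a b]]) (auto simp: wp_def indicator_def)
  have inn: "integrable lborel (\<lambda>x. wn x * indicator {a<..b} x)" for a b
    by (rule Bochner_Integration.integrable_bound[OF ib[of a b]]) (auto simp: wn_def indicator_def)
  have eqint: "(LINT x|lborel. wp x * indicator {a<..b} x) = (LINT x|lborel. wn x * indicator {a<..b} x)" for a b
  proof -
    have "w x * indicator {a<..b} x = wp x * indicator {a<..b} x - wn x * indicator {a<..b} x" for x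
      by (auto simp: wp_def wn_def indicator_def)
    then have "(LINT x|lborel. w x * indicator {a<..b} x) = (LINT x|lborel. wp x * indicator {a<..b} x) - (LINT x|lborel. wn x * indicator {a<..b} x)"
      using Bochner_Integration.integral_diff[OF ip inn] by simp
    then show ?thesis using interval_zero_Ioc[OF w T, of a b] by simp
  qed
  have em: "emeasure (density lborel (\<lambda>x. ennreal (g x))) {a<..b} = ennreal (LINT x|lborel. g x * indicator {a<..b} x)"
    if g: "g \<in> borel_measurable borel" "\<And>x. g x \<ge> 0" "integrable lborel (\<lambda>x. g x * indicator {a<..b} x)" for g :: "real \<Rightarrow> real" and a b :: real
  proof -
    have "emeasure (density lborel (\<lambda>x. ennreal (g x))) {a<..b} = (\<integral>\<^sup>+ x. ennreal (g x) * indicator {a<..b} x \<partial>lborel)"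
      using g greaterThanAtMost_borel[of a b] by (intro emeasure_density) auto
    also have "\<dots> = (\<integral>\<^sup>+ x. ennreal (g x * indicator {a<..b} x) \<partial>lborel)"
      by (auto intro!: nn_integral_cong simp: indicator_def)
    also have "\<dots> = ennreal (LINT x|lborel. g x * indicator {a<..b} x)"
      using g by (intro nn_integral_eq_integral) auto
    finally show ?thesis .
  qed
  have sb: "sets (borel::real measure) = sigma_sets UNIV (range (\<lambda>(a, b). {a<..b::real}))"
    by (subst borel_sigma_sets_Ioc) (simp add: sets_measure_of)
  have dens: "density lborel (\<lambda>x. ennreal (wp x)) = density lborel (\<lambda>x. ennreal (wn x))"
  proof (rule measure_eqI_generator_eq[OF Ioc_Int_stable, of UNIV _ _ "\<lambda>i. {- real i<..real i}"])
    show "range (\<lambda>(a, b). {a<..b::real}) \<subseteq> Pow UNIV" by simp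
    show "emeasure (density lborel (\<lambda>x. ennreal (wp x))) X = emeasure (density lborel (\<lambda>x. ennreal (wn x))) X"
      if "X \<in> range (\<lambda>(a, b). {a<..b})" for X
    proof -
      from that obtain a b where X: "X = {a<..b}" by auto
      have "\<And>x. 0 \<le> wp x" "\<And>x. 0 \<le> wn x" by (auto simp: wp_def wn_def)
      then show ?thesis unfolding X
        using em[of wp a b] em[of wn a b] ip[of a b] inn[of a b] eqint[of a b] by simp
    qed
    show "sets (density lborel (\<lambda>x. ennreal (wp x))) = sigma_sets UNIV (range (\<lambda>(a, b). {a<..b}))"
      "sets (density lborel (\<lambda>x. ennreal (wn x))) = sigma_sets UNIV (range (\<lambda>(a, b). {a<..b}))"
      using sb by simp_all
    show "range (\<lambda>i. {- real i<..real i}) \<subseteq> range (\<lambda>(a, b). {a<..b})" by auto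
    show "(\<Union>i. {- real i<..real i}) = UNIV"
    proof (intro set_eqI iffI)
      fix x :: real
      obtain n :: nat where "\<bar>x\<bar> < real n" using reals_Archimedean2 by blast
      then show "x \<in> (\<Union>i. {- real i<..real i})" by (auto intro!: exI[of _ n])
    qed auto
    show "emeasure (density lborel (\<lambda>x. ennreal (wp x))) {- real i<..real i} \<noteq> \<infinity>" for i
      using em[of wp "- real i" "real i"] ip by (simp add: wp_def)
  qed
  have "AE x in lborel. ennreal (wp x) = ennreal (wn x)"
    by (rule sigma_finite_measure.density_unique[OF sigma_finite_lborel _ _ dens]) auto
  then show ?thesis
    by (rule AE_mp) (auto intro!: AE_I2 simp: wp_def wn_def max_def split: if_splits)
qed

lemma tf_integral_eq:
  assumes D: "tf D M" and N: "\<bar>M\<bar> < N" "N \<le> x"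
  shows "integral {-N..x} (D 0) = (LINT y|lborel. D 0 y)"
proof -
  have li: "loc_int (D 0)" using D by (intro cont_loc_int smooth_cont) (auto simp: tf_def)
  have "integral {-N..x} (D 0) = (LINT y:{-N..x}|lborel. D 0 y)"
    using loc_int_integral[OF li] by simp
  also have "\<dots> = (LINT y|lborel. D 0 y)"
    unfolding set_lebesgue_integral_def
  proof (rule Bochner_Integration.integral_cong)
    fix y show "indicator {-N..x} y *\<^sub>R D 0 y = D 0 y"
      using D N by (cases "M < \<bar>y\<bar>") (auto simp: indicator_def tf_def)
  qed simp
  finally show ?thesis .
qed

definition Pr :: "real \<Rightarrow> (nat \<Rightarrow> real \<Rightarrow> real) \<Rightarrow> nat \<Rightarrow> real \<Rightarrow> real" where
  "Pr N D k = (case k of 0 \<Rightarrow> prim (-N) (D 0) | Suc j \<Rightarrow> D j)"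

lemma tf_Pr:
  assumes D: "tf D M" and z: "(LINT x|lborel. D 0 x) = 0"
  shows "tf (Pr (\<bar>M\<bar> + 1) D) (\<bar>M\<bar> + 1)"
proof (rule supp_all)
  have c: "continuous_on UNIV (D 0)" using D by (intro smooth_cont) (auto simp: tf_def)
  show "smooth (Pr (\<bar>M\<bar> + 1) D)"
    unfolding smooth_def
  proof (intro allI)
    fix k x show "(Pr (\<bar>M\<bar> + 1) D k has_real_derivative Pr (\<bar>M\<bar> + 1) D (Suc k) x) (at x)"
      using D prim_deriv[OF c] by (cases k) (auto simp: Pr_def tf_def smooth_def)
  qed
  fix x assume x: "\<bar>M\<bar> + 1 < \<bar>x\<bar>"
  show "Pr (\<bar>M\<bar> + 1) D 0 x = 0"
  proof (cases "x < 0")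
    case True
    then have "x \<le> - (\<bar>M\<bar> + 1)" using x by auto
    then have "integral {x..-(\<bar>M\<bar> + 1)} (D 0) = integral {x..-(\<bar>M\<bar> + 1)} (\<lambda>_. 0)"
      using D by (intro integral_cong) (auto simp: tf_def)
    then show ?thesis using True x by (simp add: Pr_def prim_def)
  next
    case False
    then show ?thesis using x tf_integral_eq[OF D, of "\<bar>M\<bar> + 1" x] z by (simp add: Pr_def prim_def)
  qed
qed

lemma int_th0: "(LINT x|lborel. th 0 x) = Th 1"
proof -
  have "integral {-2..2} (th 0) = (LINT y|lborel. th 0 y)"
    by (rule tf_integral_eq[OF tf_th]) auto
  moreover have "integral {-2..2} (th 0) = integral {-2..-1} (th 0) + integral {-1..2} (th 0)"
    by (rule Henstock_Kurzweil_Integration.integral_combine[symmetric])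
       (auto intro: integrable_continuous_real continuous_on_subset[OF smooth_cont[OF smooth_th]])
  moreover have "integral {-2..-1} (th 0) = integral {-2..-1::real} (\<lambda>_. 0)"
    by (rule integral_cong) (auto simp: th0_zero)
  moreover have "Th 2 = Th 1" by (rule Th_const) simp
  ultimately show ?thesis by (simp add: Th_def prim_def)
qed

lemma decomp:
  assumes D: "tf D M"
  shows "\<exists>F M'. tf F M' \<and> (\<forall>k x. D k x = F (Suc k) x + ((LINT x|lborel. D 0 x) / Th 1) * th k x)"
proof -
  define r where "r = (LINT x|lborel. D 0 x) / Th 1"
  define M1 where "M1 = max M 1"
  define E where "E = (\<lambda>k x. 1 * D k x + (- r) * th k x)"
  have tE: "tf E M1" unfolding E_def M1_def
    by (intro tf_lin tf_mono[OF D] tf_mono[OF tf_th]) auto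
  have iD: "integrable lborel (D 0)" using integrable_test[OF cont_loc_int[of "\<lambda>_. 1"] D, of 0] by simp
  have ith: "integrable lborel (th 0)" using integrable_test[OF cont_loc_int[of "\<lambda>_. 1"] tf_th, of 0] by simp
  have "(LINT x|lborel. E 0 x) = (LINT x|lborel. D 0 x) - r * (LINT x|lborel. th 0 x)"
    unfolding E_def using iD ith by simp
  also have "\<dots> = 0" unfolding r_def int_th0 using Th1_pos by simp
  finally have z: "(LINT x|lborel. E 0 x) = 0" .
  show ?thesis
  proof (intro exI conjI allI)
    show "tf (Pr (\<bar>M1\<bar> + 1) E) (\<bar>M1\<bar> + 1)" by (rule tf_Pr[OF tE z])
    fix k x show "D k x = Pr (\<bar>M1\<bar> + 1) E (Suc k) x + ((LINT x|lborel. D 0 x) / Th 1) * th k x"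
      by (simp add: Pr_def E_def r_def)
  qed
qed

lemma const_lemma:
  assumes v: "loc_int v" and T: "\<forall>D. test_fun D \<longrightarrow> (LINT x|lborel. v x * D (Suc 0) x) = 0"
  shows "\<exists>c. AE x in lborel. v x = c"
proof -
  define c where "c = (LINT x|lborel. v x * th 0 x) / Th 1"
  have "AE x in lborel. v x - c = 0"
  proof (rule fund_lemma)
    show "loc_int (\<lambda>x. v x - c)"
      using loc_int_add[OF v cont_loc_int[of "\<lambda>_. 1"], of 1 "-c"] by simp
    show "\<forall>D. test_fun D \<longrightarrow> (LINT x|lborel. (v x - c) * D 0 x) = 0"
    proof (intro allI impI)
      fix D assume "test_fun D"
      then obtain M where D: "tf D M" using test_tf by blast
      obtain F M' where F: "tf F M'" and dec: "\<And>k x. D k x = F (Suc k) x + ((LINT x|lborel. D 0 x) / Th 1) * th k x"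
        using decomp[OF D] by blast
      let ?r = "(LINT x|lborel. D 0 x) / Th 1"
      have iF: "integrable lborel (\<lambda>x. v x * F (Suc 0) x)" by (rule integrable_test[OF v F])
      have ith: "integrable lborel (\<lambda>x. v x * th 0 x)" by (rule integrable_test[OF v tf_th])
      have iD: "integrable lborel (\<lambda>x. v x * D 0 x)" by (rule integrable_test[OF v D])
      have iD1: "integrable lborel (\<lambda>x. D 0 x)" using integrable_test[OF cont_loc_int[of "\<lambda>_. 1"] D, of 0] by simp
      have "(LINT x|lborel. v x * D 0 x) = (LINT x|lborel. v x * F (Suc 0) x + ?r * (v x * th 0 x))"
        by (subst dec) (simp add: algebra_simps)
      also have "\<dots> = (LINT x|lborel. v x * F (Suc 0) x) + ?r * (LINT x|lborel. v x * th 0 x)"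
        using iF ith by simp
      also have "(LINT x|lborel. v x * F (Suc 0) x) = 0" using T tf_test[OF F] by blast
      finally have e: "(LINT x|lborel. v x * D 0 x) = c * (LINT x|lborel. D 0 x)"
        by (simp add: c_def)
      have "(LINT x|lborel. (v x - c) * D 0 x) = (LINT x|lborel. v x * D 0 x) - c * (LINT x|lborel. D 0 x)"
        using iD iD1 by (simp add: algebra_simps)
      then show "(LINT x|lborel. (v x - c) * D 0 x) = 0" using e by simp
    qed
  qed
  then show ?thesis by auto
qed

lemma dbr:
  assumes w: "loc_int w" and h: "loc_int h"
    and T: "\<forall>D. test_fun D \<longrightarrow> (LINT x|lborel. w x * D (Suc 0) x) = - (LINT x|lborel. h x * D 0 x)"
  shows "\<exists>c. AE x in lborel. w x = prim 0 h x + c"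
proof -
  have lp: "loc_int (prim 0 h)" by (rule cont_loc_int[OF prim_cont_loc[OF h]])
  have "\<exists>c. AE x in lborel. w x - prim 0 h x = c"
  proof (rule const_lemma)
    show "loc_int (\<lambda>x. w x - prim 0 h x)" using loc_int_add[OF w lp, of 1 "-1"] by simp
    show "\<forall>D. test_fun D \<longrightarrow> (LINT x|lborel. (w x - prim 0 h x) * D (Suc 0) x) = 0"
    proof (intro allI impI)
      fix D assume tD: "test_fun D"
      then obtain M where D: "tf D M" using test_tf by blast
      have "(LINT x|lborel. (w x - prim 0 h x) * D (Suc 0) x) = (LINT x|lborel. w x * D (Suc 0) x) - (LINT x|lborel. prim 0 h x * D (Suc 0) x)"
        unfolding left_diff_distrib by (rule Bochner_Integration.integral_diff[OF integrable_test[OF w D] integrable_test[OF lp D]])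
      then show "(LINT x|lborel. (w x - prim 0 h x) * D (Suc 0) x) = 0"
        using T tD ibp_prim[OF h D] by simp
    qed
  qed
  then obtain c where "AE x in lborel. w x - prim 0 h x = c" by blast
  then have "AE x in lborel. w x = prim 0 h x + c" by (rule AE_mp) (auto intro!: AE_I2)
  then show ?thesis by blast
qed

lemma prim_const: "prim 0 (\<lambda>_. k) x = k * x"
  by (simp add: prim_def)

lemma dbr2:
  assumes w: "loc_int w" and g: "loc_int g"
    and T: "\<forall>D. test_fun D \<longrightarrow> (LINT x|lborel. w x * D 2 x) = (LINT x|lborel. g x * D 0 x)"
  shows "\<exists>c0 c1. AE x in lborel. w x = prim 0 (prim 0 g) x + c1 * x + c0"
proof -
  define G where "G = prim 0 g"
  define K where "K = prim 0 G"
  have lG: "loc_int G" unfolding G_def by (rule cont_loc_int[OF prim_cont_loc[OF g]])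
  have lK: "loc_int K" unfolding K_def by (rule cont_loc_int[OF prim_cont_loc[OF lG]])
  define v where "v x = w x - K x" for x
  have lv: "loc_int v" using loc_int_add[OF w lK, of 1 "-1"] by (simp add: v_def[abs_def])
  have v2: "(LINT x|lborel. v x * D 2 x) = 0" if D: "tf D M" for D M
  proof -
    have s: "tf (\<lambda>k. D (Suc k)) M" by (rule tf_shift[OF D])
    have "(LINT x|lborel. K x * D 2 x) = - (LINT x|lborel. G x * D (Suc 0) x)"
      using ibp_prim[OF lG s, of 0] by (simp add: K_def numeral_2_eq_2)
    also have "\<dots> = (LINT x|lborel. g x * D 0 x)"
      using ibp_prim[OF g D, of 0] by (simp add: G_def)
    finally have "(LINT x|lborel. K x * D 2 x) = (LINT x|lborel. g x * D 0 x)" .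
    moreover have "(LINT x|lborel. v x * D 2 x) = (LINT x|lborel. w x * D 2 x) - (LINT x|lborel. K x * D 2 x)"
      unfolding v_def left_diff_distrib by (rule Bochner_Integration.integral_diff[OF integrable_test[OF w D] integrable_test[OF lK D]])
    ultimately show ?thesis using T tf_test[OF D] by simp
  qed
  define m where "m = (LINT x|lborel. v x * th (Suc 0) x) / Th 1"
  have "\<exists>c. AE x in lborel. v x = prim 0 (\<lambda>_. - m) x + c"
  proof (rule dbr[OF lv cont_loc_int])
    show "\<forall>D. test_fun D \<longrightarrow> (LINT x|lborel. v x * D (Suc 0) x) = - (LINT x|lborel. - m * D 0 x)"
    proof (intro allI impI)
      fix D assume "test_fun D"
      then obtain M where D: "tf D M" using test_tf by blast
      obtain F M' where F: "tf F M'" and dec: "\<And>k x. D k x = F (Suc k) x + ((LINT x|lborel. D 0 x) / Th 1) * th k x"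
        using decomp[OF D] by blast
      let ?r = "(LINT x|lborel. D 0 x) / Th 1"
      have iF: "integrable lborel (\<lambda>x. v x * F 2 x)" by (rule integrable_test[OF lv F])
      have ith: "integrable lborel (\<lambda>x. v x * th (Suc 0) x)" by (rule integrable_test[OF lv tf_th])
      have "(LINT x|lborel. v x * D (Suc 0) x) = (LINT x|lborel. v x * F 2 x + ?r * (v x * th (Suc 0) x))"
        by (subst dec) (simp add: algebra_simps numeral_2_eq_2)
      also have "\<dots> = (LINT x|lborel. v x * F 2 x) + ?r * (LINT x|lborel. v x * th (Suc 0) x)"
        using iF ith by simp
      also have "(LINT x|lborel. v x * F 2 x) = 0" by (rule v2[OF F])
      finally show "(LINT x|lborel. v x * D (Suc 0) x) = - (LINT x|lborel. - m * D 0 x)"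
        by (simp add: m_def)
    qed
  qed simp
  then obtain c where "AE x in lborel. v x = - m * x + c" by (auto simp: prim_const)
  then have "AE x in lborel. w x = prim 0 (prim 0 g) x + (- m) * x + c"
    by (rule AE_mp) (auto simp: v_def K_def G_def intro!: AE_I2)
  then show ?thesis by blast
qed

lemma prim_AE:
  assumes f: "loc_int f" and g: "loc_int g" and e: "AE x in lborel. f x = g x"
  shows "prim a f = prim a g"
proof -
  have "integral {u..v} f = integral {u..v} g" for u v
  proof -
    have "(LINT x:{u..v}|lborel. f x) = (LINT x:{u..v}|lborel. g x)"
      unfolding set_lebesgue_integral_def
      by (rule integral_cong_AE) (use f g e in \<open>auto simp: loc_int_def elim: AE_mp\<close>)
    then show ?thesis using loc_int_integral[OF f] loc_int_integral[OF g] by simp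
  qed
  then show ?thesis by (simp add: prim_def fun_eq_iff)
qed

lemma loc_int_AE:
  assumes g: "loc_int g" and fm: "f \<in> borel_measurable borel" and e: "AE x in lborel. f x = g x"
  shows "loc_int f"
  unfolding loc_int_def
proof (intro conjI allI fm)
  fix a b
  have "integrable lborel (\<lambda>x. indicator {a..b} x *\<^sub>R g x)" using g by (simp add: loc_int_def set_integrable_def)
  then have "integrable lborel (\<lambda>x. indicator {a..b} x *\<^sub>R f x)"
    by (rule integrable_cong_AE_imp) (use fm e in \<open>auto elim: AE_mp\<close>)
  then show "set_integrable lborel {a..b} f" by (simp add: set_integrable_def)
qed

lemma prim_cont_deriv:
  assumes "continuous_on UNIV g" shows "(prim 0 g has_real_derivative g x) (at x)"
  by (rule prim_deriv[OF assms])

lemma weak_deriv_shift: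
  assumes "weak_deriv u v" "tf D M"
  shows "(LINT x|lborel. u x * D (Suc (Suc k)) x) = - (LINT x|lborel. v x * D (Suc k) x)"
proof -
  have "tf (\<lambda>j. D (j + Suc k)) M"
  proof (induction k)
    case 0 then show ?case using tf_shift[OF assms(2)] by simp
  next
    case (Suc k)
    then show ?case using tf_shift[OF Suc] by simp
  qed
  then have "test_fun (\<lambda>j. D (j + Suc k))" by (rule tf_test)
  note W = assms(1)[unfolded weak_deriv_def, rule_format, OF this]
  then show ?thesis by simp
qed

lemma L2_AE:
  assumes "L2 u" "v \<in> borel_measurable borel" "AE x in lborel. u x = v x"
  shows "L2 v"
  using assms unfolding L2_def
proof (intro conjI)
  assume a: "u \<in> borel_measurable lborel \<and> integrable lborel (\<lambda>x. (u x)\<^sup>2)" "v \<in> borel_measurable borel" "AE x in lborel. u x = v x"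
  show "v \<in> borel_measurable lborel" using a by simp
  show "integrable lborel (\<lambda>x. (v x)\<^sup>2)"
    by (rule integrable_cong_AE_imp[where g="\<lambda>x. (u x)\<^sup>2"]) (use a in \<open>auto elim: AE_mp\<close>)
qed

lemma regularity:
  fixes \<phi> f :: "real \<Rightarrow> real"
  assumes H: "H2 \<phi>" and W: "weak_solution c \<beta> f \<phi>" and fc: "continuous_on UNIV f"
  shows "\<exists>P P1 P2 P3. (\<forall>x. (P has_real_derivative P1 x) (at x)) \<and> (\<forall>x. (P1 has_real_derivative P2 x) (at x))
     \<and> (\<forall>x. (P2 has_real_derivative P3 x) (at x))
     \<and> (\<forall>x. (P3 has_real_derivative ((c\<^sup>2 - 1) * P x - \<beta> * P2 x + f (P x))) (at x))
     \<and> (AE x in lborel. \<phi> x = P x) \<and> L2 P \<and> L2 P1 \<and> L2 P2"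
proof -
  define a where "a = c\<^sup>2 - 1"
  obtain u1 u2 where L: "L2 \<phi>" "L2 u1" "L2 u2" and wd1: "weak_deriv \<phi> u1" and wd2: "weak_deriv u1 u2"
    using H unfolding H2_def by blast
  have l0: "loc_int \<phi>" and l1: "loc_int u1" and l2: "loc_int u2" using L L2_loc_int by auto
  have fm[measurable]: "f \<in> borel_measurable borel" using fc by (rule borel_measurable_continuous_onI)
  have phim[measurable]: "\<phi> \<in> borel_measurable borel" using l0 by (simp add: loc_int_def)
  have u2m[measurable]: "u2 \<in> borel_measurable borel" using l2 by (simp add: loc_int_def)
  obtain c1 where R1: "AE x in lborel. u1 x = prim 0 u2 x + c1"
    using dbr[OF l1 l2] wd2 unfolding weak_deriv_def by auto
  define U1 where "U1 x = prim 0 u2 x + c1" for x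
  have cU1: "continuous_on UNIV U1" unfolding U1_def by (intro continuous_intros prim_cont_loc[OF l2])
  have lU1: "loc_int U1" by (rule cont_loc_int[OF cU1])
  obtain c0 where R2: "AE x in lborel. \<phi> x = prim 0 u1 x + c0"
    using dbr[OF l0 l1] wd1 unfolding weak_deriv_def by auto
  have pe: "prim 0 u1 = prim 0 U1" by (rule prim_AE[OF l1 lU1]) (use R1 in \<open>simp add: U1_def\<close>)
  define P where "P x = prim 0 U1 x + c0" for x
  have cP: "continuous_on UNIV P" unfolding P_def by (intro continuous_intros prim_cont_loc[OF lU1])
  have R2': "AE x in lborel. \<phi> x = P x" using R2 by (simp add: pe P_def)
  define g where "g x = a * P x - \<beta> * u2 x + f (P x)" for x
  have cfP: "continuous_on UNIV (\<lambda>x. a * P x + f (P x))"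
    by (intro continuous_intros cP continuous_on_compose2[OF fc]) auto
  have lg: "loc_int g"
    using loc_int_add[OF cont_loc_int[OF cfP] l2, of 1 "- \<beta>"] by (simp add: g_def[abs_def] algebra_simps)
  have eq: "(LINT x|lborel. u2 x * D 2 x) = (LINT x|lborel. g x * D 0 x)" if tD: "test_fun D" for D
  proof -
    obtain M where D: "tf D M" using test_tf[OF tD] by blast
    have I1: "(LINT x|lborel. \<phi> x * D 4 x) = (LINT x|lborel. u2 x * D 2 x)"
      using weak_deriv_shift[OF wd1 D, of 2] weak_deriv_shift[OF wd2 D, of 1] by (simp add: numeral_eq_Suc)
    have I2: "(LINT x|lborel. \<phi> x * D 2 x) = (LINT x|lborel. u2 x * D 0 x)"
      using weak_deriv_shift[OF wd1 D, of 0] wd2 tD unfolding weak_deriv_def by (simp add: numeral_eq_Suc)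
    define S where "S x = (1 - c\<^sup>2) * \<phi> x * D 0 x + \<beta> * \<phi> x * D 2 x + \<phi> x * D 4 x - f (\<phi> x) * D 0 x" for x
    have iS: "integrable lborel S" and S0: "(LINT x|lborel. S x) = 0"
      using W tD unfolding weak_solution_def S_def[abs_def] by auto
    have i0: "integrable lborel (\<lambda>x. \<phi> x * D k x)" for k by (rule integrable_test[OF l0 D])
    have iu: "integrable lborel (\<lambda>x. u2 x * D 0 x)" by (rule integrable_test[OF l2 D])
    have ef: "f (\<phi> x) * D 0 x = (1 - c\<^sup>2) * (\<phi> x * D 0 x) + \<beta> * (\<phi> x * D 2 x) + \<phi> x * D 4 x - S x" for x
      by (simp add: S_def algebra_simps)
    have iF: "integrable lborel (\<lambda>x. f (\<phi> x) * D 0 x)"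
      unfolding ef using i0 iS by (intro Bochner_Integration.integrable_diff Bochner_Integration.integrable_add integrable_mult_right) auto
    have "0 = (LINT x|lborel. S x)" using S0 by simp
    also have "\<dots> = (1 - c\<^sup>2) * (LINT x|lborel. \<phi> x * D 0 x) + \<beta> * (LINT x|lborel. \<phi> x * D 2 x)
        + (LINT x|lborel. \<phi> x * D 4 x) - (LINT x|lborel. f (\<phi> x) * D 0 x)"
    proof -
      have "S = (\<lambda>x. (1 - c\<^sup>2) * (\<phi> x * D 0 x) + \<beta> * (\<phi> x * D 2 x) + \<phi> x * D 4 x - f (\<phi> x) * D 0 x)"
        by (simp add: S_def fun_eq_iff algebra_simps)
      then show ?thesis using i0 iF by simp
    qed
    finally have E0: "(LINT x|lborel. u2 x * D 2 x) = a * (LINT x|lborel. \<phi> x * D 0 x) - \<beta> * (LINT x|lborel. u2 x * D 0 x) + (LINT x|lborel. f (\<phi> x) * D 0 x)"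
      using I1 I2 by (simp add: a_def algebra_simps)
    have "(LINT x|lborel. g x * D 0 x) = (LINT x|lborel. a * (\<phi> x * D 0 x) - \<beta> * (u2 x * D 0 x) + f (\<phi> x) * D 0 x)"
    proof (rule integral_cong_AE)
      show "(\<lambda>x. g x * D 0 x) \<in> borel_measurable lborel"
        using lg tf_meas[OF D, of 0] by (simp add: loc_int_def borel_measurable_times)
      show "(\<lambda>x. a * (\<phi> x * D 0 x) - \<beta> * (u2 x * D 0 x) + f (\<phi> x) * D 0 x) \<in> borel_measurable lborel"
        using tf_meas[OF D, of 0] by measurable
      show "AE x in lborel. g x * D 0 x = a * (\<phi> x * D 0 x) - \<beta> * (u2 x * D 0 x) + f (\<phi> x) * D 0 x"
        using R2' by (rule AE_mp) (auto simp: g_def algebra_simps intro!: AE_I2)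
    qed
    also have "\<dots> = a * (LINT x|lborel. \<phi> x * D 0 x) - \<beta> * (LINT x|lborel. u2 x * D 0 x) + (LINT x|lborel. f (\<phi> x) * D 0 x)"
      using i0 iu iF by simp
    finally show ?thesis using E0 by simp
  qed
  obtain e0 e1 where R4: "AE x in lborel. u2 x = prim 0 (prim 0 g) x + e1 * x + e0"
    using dbr2[OF l2 lg] eq by blast
  define U2 where "U2 x = prim 0 (prim 0 g) x + e1 * x + e0" for x
  have lpg: "loc_int (prim 0 g)" by (rule cont_loc_int[OF prim_cont_loc[OF lg]])
  have cU2: "continuous_on UNIV U2" unfolding U2_def by (intro continuous_intros prim_cont_loc[OF lpg])
  define gc where "gc x = a * P x - \<beta> * U2 x + f (P x)" for x
  have cgc: "continuous_on UNIV gc" unfolding gc_def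
    by (intro continuous_intros cP cU2 continuous_on_compose2[OF fc]) auto
  have "prim 0 g = prim 0 gc"
    by (rule prim_AE[OF lg cont_loc_int[OF cgc]]) (use R4 in \<open>auto simp: g_def gc_def U2_def elim!: AE_mp intro!: AE_I2\<close>)
  then have U2e: "U2 x = prim 0 (prim 0 gc) x + e1 * x + e0" for x by (simp add: U2_def)
  have "prim 0 u2 = prim 0 U2"
    by (rule prim_AE[OF l2 cont_loc_int[OF cU2]]) (use R4 in \<open>simp add: U2_def\<close>)
  then have U1e: "U1 x = prim 0 U2 x + c1" for x by (simp add: U1_def)
  have d1: "(P has_real_derivative U1 x) (at x)" for x
    unfolding P_def by (auto intro!: derivative_eq_intros prim_deriv[OF cU1])
  have d2: "(U1 has_real_derivative U2 x) (at x)" for x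
    unfolding U1e[abs_def] by (auto intro!: derivative_eq_intros prim_deriv[OF cU2])
  have cpg: "continuous_on UNIV (prim 0 gc)" by (rule prim_cont[OF cgc])
  have d3: "(U2 has_real_derivative (prim 0 gc x + e1)) (at x)" for x
    unfolding U2e[abs_def] by (auto intro!: derivative_eq_intros prim_deriv[OF cpg])
  have d4: "((\<lambda>x. prim 0 gc x + e1) has_real_derivative gc x) (at x)" for x
    by (auto intro!: derivative_eq_intros prim_deriv[OF cgc])
  have LP: "L2 P" by (rule L2_AE[OF L(1) _ R2']) (rule borel_measurable_continuous_onI[OF cP])
  have LU1: "L2 U1" by (rule L2_AE[OF L(2) _ R1[folded U1_def]]) (rule borel_measurable_continuous_onI[OF cU1])
  have LU2: "L2 U2" by (rule L2_AE[OF L(3) _ R4[folded U2_def]]) (rule borel_measurable_continuous_onI[OF cU2])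
  show ?thesis
    by (rule exI[of _ P], rule exI[of _ U1], rule exI[of _ U2], rule exI[of _ "\<lambda>x. prim 0 gc x + e1"])
       (use d1 d2 d3 d4 R2' LP LU1 LU2 in \<open>simp add: gc_def a_def\<close>)
qed

lemma int_ind: "a \<le> b \<Longrightarrow> (LINT x|lborel. indicator {a..b} x :: real) = b - a"
  by simp

lemma abs_set_int_le:
  assumes "integrable lborel (e :: real \<Rightarrow> real)" and Am: "A \<in> sets borel"
  shows "\<bar>LINT x|lborel. indicator A x * e x\<bar> \<le> (LINT x|lborel. \<bar>e x\<bar>)"
proof -
  have "\<bar>LINT x|lborel. indicator A x * e x\<bar> \<le> (LINT x|lborel. \<bar>indicator A x * e x\<bar>)"
    using integral_norm_bound[of lborel "\<lambda>x. indicator A x * e x"] by simp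
  also have "\<dots> \<le> (LINT x|lborel. \<bar>e x\<bar>)"
  proof (rule integral_mono)
    show "integrable lborel (\<lambda>x. \<bar>e x\<bar>)" using assms by simp
    have [measurable]: "e \<in> borel_measurable borel" using assms(1) by (simp add: borel_measurable_integrable)
    show "integrable lborel (\<lambda>x. \<bar>indicator A x * e x\<bar>)"
      by (rule Bochner_Integration.integrable_bound[OF integrable_abs[OF assms(1)]]) (use Am in \<open>auto simp: indicator_def\<close>)
  qed (auto simp: indicator_def)
  finally show ?thesis .
qed

lemma core:
  fixes s s1 e :: "real \<Rightarrow> real"
  assumes ds: "\<And>x. (s has_real_derivative s1 x) (at x)" and ce: "continuous_on UNIV e"
    and iS: "integrable lborel s" and ie: "integrable lborel e"
    and dl: "\<delta> > 0" and ge: "\<And>x. x \<ge> R0 \<Longrightarrow> s1 x + e x \<ge> \<delta>"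
  shows False
proof -
  define Ie where "Ie = (LINT x|lborel. \<bar>e x\<bar>)"
  define Is where "Is = (LINT x|lborel. \<bar>s x\<bar>)"
  define W where "W x = s x + prim 0 e x" for x
  have dW: "(W has_real_derivative s1 x + e x) (at x)" for x
    unfolding W_def by (intro DERIV_add ds prim_deriv[OF ce])
  have cW: "continuous_on S W" for S
    by (meson DERIV_isCont continuous_at_imp_continuous_on dW)
  have mono: "W R0 - \<delta> * R0 \<le> W T - \<delta> * T" if "R0 \<le> T" for T
  proof (rule DERIV_nonneg_imp_increasing_open[of R0 T "\<lambda>x. W x - \<delta> * x", OF that])
    fix x assume "R0 < x" "x < T"
    then show "\<exists>y. ((\<lambda>x. W x - \<delta> * x) has_real_derivative y) (at x) \<and> 0 \<le> y"
      using ge[of x] dW[of x] by (intro exI[of _ "s1 x + e x - \<delta>"]) (auto intro!: derivative_eq_intros)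
  qed (intro continuous_intros cW)
  have le: "loc_int e" by (rule cont_loc_int[OF ce])
  have pb: "\<bar>prim 0 e T\<bar> \<le> Ie" if "0 \<le> T" for T
  proof -
    have "prim 0 e T = (LINT x:{0..T}|lborel. e x)" using that loc_int_integral[OF le] by (simp add: prim_def)
    also have "\<dots> = (LINT x|lborel. indicator {0..T} x * e x)" by (simp add: set_lebesgue_integral_def)
    finally show ?thesis using abs_set_int_le[OF ie, of "{0..T}"] by (simp add: Ie_def)
  qed
  define T1 where "T1 = max R0 0 + (\<bar>W R0 - \<delta> * R0\<bar> + Ie + 1) / \<delta>"
  have s1: "s T \<ge> 1" if "T \<ge> T1" for T
  proof -
    have Ie0: "Ie \<ge> 0" unfolding Ie_def by simp
    have "(\<bar>W R0 - \<delta> * R0\<bar> + Ie + 1) / \<delta> \<ge> 0" using Ie0 dl by simp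
    then have "T \<ge> max R0 0" using that unfolding T1_def by linarith
    then have "W R0 - \<delta> * R0 \<le> W T - \<delta> * T" "\<bar>prim 0 e T\<bar> \<le> Ie" using mono pb by auto
    moreover have "\<delta> * T \<ge> \<delta> * T1" using that dl by simp
    moreover have "\<delta> * T1 = \<delta> * max R0 0 + (\<bar>W R0 - \<delta> * R0\<bar> + Ie + 1)" using dl by (simp add: T1_def field_simps)
    moreover have "\<delta> * max R0 0 \<ge> 0" using dl by simp
    ultimately show ?thesis unfolding W_def by linarith
  qed
  obtain n :: nat where n: "Is < real n" using reals_Archimedean2 by blast
  have sm[measurable]: "s \<in> borel_measurable borel" using iS by (simp add: borel_measurable_integrable)
  have "real n = (LINT x|lborel. indicator {T1..T1 + real n} x :: real)" by simp
  also have "\<dots> \<le> (LINT x|lborel. \<bar>s x\<bar>)"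
  proof (rule integral_mono)
    show "integrable lborel (\<lambda>x. indicator {T1..T1 + real n} x :: real)"
      using integrable_indicator_iff[of lborel "{T1..T1 + real n}"] by (simp add: emeasure_lborel_Icc_eq)
    show "integrable lborel (\<lambda>x. \<bar>s x\<bar>)" using iS by simp
    fix x show "indicator {T1..T1 + real n} x \<le> \<bar>s x\<bar>"
      using s1[of x] by (auto simp: indicator_def)
  qed
  finally show False using n by (simp add: Is_def)
qed

lemma core_neg:
  fixes s s1 e :: "real \<Rightarrow> real"
  assumes ds: "\<And>x. (s has_real_derivative s1 x) (at x)" and ce: "continuous_on UNIV e"
    and iS: "integrable lborel s" and ie: "integrable lborel e"
    and dl: "\<delta> > 0" and ge: "\<And>x. x \<ge> R0 \<Longrightarrow> s1 x + e x \<le> - \<delta>"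
  shows False
proof (rule core[of "\<lambda>x. - s x" "\<lambda>x. - s1 x" "\<lambda>x. - e x", OF _ _ _ _ dl])
  show "((\<lambda>x. - s x) has_real_derivative - s1 x) (at x)" for x using ds[of x] by (rule DERIV_minus)
  show "continuous_on UNIV (\<lambda>x. - e x)" using ce by (intro continuous_intros)
  show "- s1 x + - e x \<ge> \<delta>" if "x \<ge> R0" for x using ge[OF that] by simp
qed (use iS ie in auto)

lemma core_const:
  fixes s s1 e :: "real \<Rightarrow> real"
  assumes ds: "\<And>x. (s has_real_derivative s1 x) (at x)" and ce: "continuous_on UNIV e"
    and iS: "integrable lborel s" and ie: "integrable lborel e"
    and k: "\<And>x. s1 x + e x = k"
  shows "k = 0"
proof (rule ccontr)
  assume "k \<noteq> 0"
  then consider "k > 0" | "k < 0" by linarith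
  then show False
  proof cases
    case 1 then show False using core[OF ds ce iS ie 1, of 0] k by simp
  next
    case 2 then show False using core_neg[OF ds ce iS ie, of "- k" 0] k by simp
  qed
qed

lemma GL:
  fixes V Q s s1 e :: "real \<Rightarrow> real"
  assumes dV: "\<And>x. (V has_real_derivative Q x) (at x)" and cQ: "continuous_on UNIV Q"
    and iQ: "integrable lborel Q"
    and ds: "\<And>x. (s has_real_derivative s1 x) (at x)" and Vse: "\<And>x. V x = s1 x + e x"
    and iS: "integrable lborel s" and ie: "integrable lborel e" and ce: "continuous_on UNIV e"
  shows "(LINT x|lborel. Q x) = 0"
proof -
  define L where "L = (LINT x|lborel. Q x)"
  have Qm[measurable]: "Q \<in> borel_measurable borel" using iQ by (simp add: borel_measurable_integrable)
  have lim: "((\<lambda>t. LINT x|lborel. indicator {-t..t} x * Q x) \<longlongrightarrow> L) at_top"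
    unfolding L_def
  proof (rule integral_dominated_convergence_at_top[where w="\<lambda>x. \<bar>Q x\<bar>"])
    show "integrable lborel (\<lambda>x. \<bar>Q x\<bar>)" using iQ by simp
    show "AE x in lborel. ((\<lambda>t. indicator {-t..t} x * Q x) \<longlongrightarrow> Q x) at_top"
    proof (rule AE_I2)
      fix x :: real
      have "eventually (\<lambda>t. indicator {-t..t} x * Q x = Q x) at_top"
        using eventually_ge_at_top[of "\<bar>x\<bar>"] by (rule eventually_mono) (auto simp: indicator_def)
      then show "((\<lambda>t. indicator {-t..t} x * Q x) \<longlongrightarrow> Q x) at_top"
        by (rule tendsto_eventually)
    qed
    show "\<forall>\<^sub>F i in at_top. AE x in lborel. norm (indicator {-i..i} x * Q x) \<le> \<bar>Q x\<bar>"
      by (auto simp: indicator_def)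
  qed measurable
  have ftc: "(LINT x|lborel. indicator {-t..t} x * Q x) = V t - V (-t)" if "0 \<le> t" for t
    using integral_FTC_atLeastAtMost[of "-t" t V Q] that dV cQ
    by (auto simp: has_real_derivative_iff_has_vector_derivative[symmetric]
             intro: has_field_derivative_at_within continuous_on_subset)
  have limh: "((\<lambda>t. V t - V (-t)) \<longlongrightarrow> L) at_top"
    using lim by (rule Lim_transform_eventually) (use eventually_ge_at_top[of "0::real"] in \<open>rule eventually_mono, use ftc in auto\<close>)
  define sg where "sg t = s t + s (-t)" for t
  define eg where "eg t = e t - e (-t)" for t
  have dsg: "(sg has_real_derivative (s1 t - s1 (-t))) (at t)" for t
    unfolding sg_def using ds by (auto intro!: derivative_eq_intros DERIV_chain2[OF ds])
  have ceg: "continuous_on UNIV eg" unfolding eg_def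
    by (intro continuous_intros continuous_on_compose2[OF ce]) auto
  have ir: "integrable lborel (\<lambda>x. g (- x))" if "integrable lborel g" for g :: "real \<Rightarrow> real"
    using lborel_integrable_real_affine[OF that, of "-1" 0] by simp
  have isg: "integrable lborel sg" unfolding sg_def[abs_def] using iS ir[OF iS] by simp
  have ieg: "integrable lborel eg" unfolding eg_def[abs_def] using ie ir[OF ie] by simp
  have he: "V t - V (-t) = (s1 t - s1 (-t)) + eg t" for t by (simp add: Vse eg_def)
  show ?thesis
  proof (rule ccontr)
    assume "(LINT x|lborel. Q x) \<noteq> 0"
    then consider "L > 0" | "L < 0" unfolding L_def by linarith
    then show False
    proof cases
      case 1
      have "eventually (\<lambda>t. V t - V (-t) > L / 2) at_top"
        using order_tendstoD(1)[OF limh, of "L/2"] 1 by simp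
      then obtain R0 where R0: "\<And>t. t \<ge> R0 \<Longrightarrow> V t - V (-t) > L / 2" by (auto simp: eventually_at_top_linorder)
      show False
        by (rule core[OF dsg ceg isg ieg, of "L/2" R0]) (use 1 R0 he in \<open>auto simp: less_imp_le\<close>)
    next
      case 2
      have "eventually (\<lambda>t. V t - V (-t) < L / 2) at_top"
        using order_tendstoD(2)[OF limh, of "L/2"] 2 by simp
      then obtain R0 where R0: "\<And>t. t \<ge> R0 \<Longrightarrow> V t - V (-t) < L / 2" by (auto simp: eventually_at_top_linorder)
      show False
        by (rule core_neg[OF dsg ceg isg ieg, of "- L/2" R0]) (use 2 R0 he in \<open>auto simp: less_imp_le\<close>)
    qed
  qed
qed

lemma L2_prod:
  assumes "L2 u" "L2 v" shows "integrable lborel (\<lambda>x. u x * v x)"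
proof -
  have [measurable]: "u \<in> borel_measurable borel" "v \<in> borel_measurable borel" using assms by (auto simp: L2_def)
  have i: "integrable lborel (\<lambda>x. (u x)\<^sup>2 + (v x)\<^sup>2)" using assms by (auto simp: L2_def)
  show ?thesis
  proof (rule Bochner_Integration.integrable_bound[OF i])
    show "AE x in lborel. norm (u x * v x) \<le> norm ((u x)\<^sup>2 + (v x)\<^sup>2)"
    proof (rule AE_I2)
      fix x
      have "2 * \<bar>u x\<bar> * \<bar>v x\<bar> \<le> (u x)\<^sup>2 + (v x)\<^sup>2"
        using sum_squares_bound[of "\<bar>u x\<bar>" "\<bar>v x\<bar>"] by simp
      moreover have "0 \<le> \<bar>u x\<bar> * \<bar>v x\<bar>" by simp
      moreover have "0 \<le> (u x)\<^sup>2 + (v x)\<^sup>2" by simp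
      ultimately show "norm (u x * v x) \<le> norm ((u x)\<^sup>2 + (v x)\<^sup>2)"
        by (simp only: real_norm_def abs_mult)
    qed
    show "(\<lambda>x. u x * v x) \<in> borel_measurable lborel" by measurable
  qed
qed

lemma L2_sq: "L2 u \<Longrightarrow> integrable lborel (\<lambda>x. (u x)\<^sup>2)"
  by (simp add: L2_def)

lemma sq_diff_bound:
  assumes dP: "\<And>x. (P has_real_derivative P1 x) (at x)" and cP1: "continuous_on UNIV P1"
    and LP: "L2 P" and LP1: "L2 P1" and yx: "y \<le> x"
  shows "\<bar>(P x)\<^sup>2 - (P y)\<^sup>2\<bar> \<le> (LINT x|lborel. (P x)\<^sup>2 + (P1 x)\<^sup>2)"
proof -
  have cP: "continuous_on UNIV P" by (meson DERIV_isCont continuous_at_imp_continuous_on dP)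
  have d: "((\<lambda>x. (P x)\<^sup>2) has_real_derivative 2 * P x * P1 x) (at x)" for x
    using dP[of x] by (auto intro!: derivative_eq_intros)
  have F1: "(LINT t|lborel. indicator {y..x} t *\<^sub>R (2 * P t * P1 t)) = (P x)\<^sup>2 - (P y)\<^sup>2"
    using yx d
    by (intro integral_FTC_atLeastAtMost)
       (auto simp: has_real_derivative_iff_has_vector_derivative[symmetric]
             intro: has_field_derivative_at_within continuous_on_subset intro!: continuous_intros cP cP1)
  have i2: "integrable lborel (\<lambda>t. 2 * P t * P1 t)"
    using L2_prod[OF LP LP1] by (simp add: mult.assoc)
  have "\<bar>LINT t|lborel. indicator {y..x} t * (2 * P t * P1 t)\<bar> \<le> (LINT t|lborel. \<bar>2 * P t * P1 t\<bar>)"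
    by (rule abs_set_int_le[OF i2]) simp
  also have "\<dots> \<le> (LINT x|lborel. (P x)\<^sup>2 + (P1 x)\<^sup>2)"
  proof (rule integral_mono)
    show "integrable lborel (\<lambda>t. \<bar>2 * P t * P1 t\<bar>)" using i2 by simp
    show "integrable lborel (\<lambda>x. (P x)\<^sup>2 + (P1 x)\<^sup>2)" using LP LP1 by (auto simp: L2_def)
    fix t
    show "\<bar>2 * P t * P1 t\<bar> \<le> (P t)\<^sup>2 + (P1 t)\<^sup>2"
      using sum_squares_bound[of "\<bar>P t\<bar>" "\<bar>P1 t\<bar>"] by (simp add: abs_mult)
  qed
  finally show ?thesis using F1 by simp
qed

lemma exists_small:
  assumes LP: "L2 P" shows "\<exists>y. (P y)\<^sup>2 \<le> 1"
proof (rule ccontr)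
  assume "\<not> ?thesis"
  then have g: "\<And>y. (P y)\<^sup>2 > 1" by (simp add: not_le)
  obtain n :: nat where n: "(LINT x|lborel. (P x)\<^sup>2) < real n" using reals_Archimedean2 by blast
  have "real n = (LINT x|lborel. indicator {0..real n} x :: real)" by simp
  also have "\<dots> \<le> (LINT x|lborel. (P x)\<^sup>2)"
  proof (rule integral_mono)
    show "integrable lborel (\<lambda>x. indicator {0..real n} x :: real)"
      using integrable_indicator_iff[of lborel "{0..real n}"] by (simp add: emeasure_lborel_Icc_eq)
    show "integrable lborel (\<lambda>x. (P x)\<^sup>2)" using LP by (simp add: L2_def)
    fix x show "indicator {0..real n} x \<le> (P x)\<^sup>2" using g[of x] by (auto simp: indicator_def)
  qed
  finally show False using n by simp
qed

lemma L2_bounded: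
  assumes dP: "\<And>x. (P has_real_derivative P1 x) (at x)" and cP1: "continuous_on UNIV P1"
    and LP: "L2 P" and LP1: "L2 P1"
  shows "\<exists>B. \<forall>x. \<bar>P x\<bar> \<le> B"
proof -
  define J where "J = (LINT x|lborel. (P x)\<^sup>2 + (P1 x)\<^sup>2)"
  have J0: "J \<ge> 0" unfolding J_def by (intro integral_nonneg_AE) auto
  obtain y where y: "(P y)\<^sup>2 \<le> 1" using exists_small[OF LP] by blast
  have sq: "(P x)\<^sup>2 \<le> 1 + J" for x
  proof (cases "y \<le> x")
    case True then show ?thesis using sq_diff_bound[OF dP cP1 LP LP1 True] y by (simp add: J_def)
  next
    case False then show ?thesis using sq_diff_bound[OF dP cP1 LP LP1, of x y] y by (simp add: J_def)
  qed
  have "\<bar>P x\<bar> \<le> 1 + J" for x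
  proof (cases "\<bar>P x\<bar> \<le> 1")
    case True then show ?thesis using J0 by simp
  next
    case False
    then have "\<bar>P x\<bar> * 1 \<le> \<bar>P x\<bar> * \<bar>P x\<bar>" by (intro mult_left_mono) auto
    then show ?thesis using sq[of x] by (simp add: power2_eq_square abs_mult_self_eq)
  qed
  then show ?thesis by blast
qed

lemma hom_zero:
  assumes p: "p > 1" and h: "homogeneous p f" shows "f 0 = 0"
proof -
  have e: "f 0 = 2 powr p * f 0" using h[unfolded homogeneous_def, rule_format, of 2 0] by simp
  have "2 powr p > (2::real) powr 0" using p by (intro powr_less_mono) auto
  then have "2 powr p \<noteq> (1::real)" by auto
  then show ?thesis using e by (metis mult_cancel_right2)
qed

lemma hom_pos: "homogeneous p f \<Longrightarrow> s > 0 \<Longrightarrow> f s = s powr p * f 1"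
  unfolding homogeneous_def by (drule spec[of _ s]) (drule mp, assumption, drule spec[of _ 1], simp)

lemma hom_neg: "homogeneous p f \<Longrightarrow> s < 0 \<Longrightarrow> f s = (- s) powr p * f (- 1)"
  unfolding homogeneous_def by (drule spec[of _ "- s"]) (drule mp, simp, drule spec[of _ "- 1"], simp)

lemma hom_bound:
  assumes p: "p > 1" and h: "homogeneous p f"
  shows "\<bar>f s\<bar> \<le> (\<bar>f 1\<bar> + \<bar>f (-1)\<bar>) * \<bar>s\<bar> powr p"
proof -
  consider "s > 0" | "s = 0" | "s < 0" by linarith
  then show ?thesis
  proof cases
    case 1 then show ?thesis using hom_pos[OF h 1] by (simp add: abs_mult mult_right_mono)
  next
    case 2 then show ?thesis using hom_zero[OF p h] by simp
  next
    case 3 then show ?thesis using hom_neg[OF h 3] by (simp add: abs_mult mult_right_mono)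
  qed
qed

lemma hom_lin_bound:
  assumes p: "p > 1" and h: "homogeneous p f" and B: "\<bar>s\<bar> \<le> B"
  shows "\<bar>f s\<bar> \<le> (\<bar>f 1\<bar> + \<bar>f (-1)\<bar>) * B powr (p - 1) * \<bar>s\<bar>"
proof (cases "s = 0")
  case True then show ?thesis using hom_zero[OF p h] by simp
next
  case False
  have "\<bar>s\<bar> powr p = \<bar>s\<bar> powr (p - 1) * \<bar>s\<bar>" using False by (simp add: powr_diff)
  also have "\<dots> \<le> B powr (p - 1) * \<bar>s\<bar>" using B p by (intro mult_right_mono powr_mono2) auto
  finally have "\<bar>s\<bar> powr p \<le> B powr (p - 1) * \<bar>s\<bar>" .
  then show ?thesis using hom_bound[OF p h, of s]
    by (smt (verit, best) abs_ge_zero mult.assoc mult_left_mono)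
qed

lemma euler:
  assumes p: "p > 1" and h: "homogeneous p f" and d: "\<And>x. (f has_real_derivative f1 x) (at x)"
  shows "s * f1 s = p * f s"
proof -
  have d1: "((\<lambda>t. f (t * s)) has_real_derivative f1 (1 * s) * s) (at 1)"
    by (rule DERIV_chain2[OF d]) (auto intro!: derivative_eq_intros)
  have d2: "((\<lambda>t. t powr p * f s) has_real_derivative p * 1 powr (p - 1) * f s) (at 1)"
    by (auto intro!: derivative_eq_intros)
  have d3: "((\<lambda>t. f (t * s)) has_real_derivative p * 1 powr (p - 1) * f s) (at 1)"
    by (rule has_field_derivative_transform_within_open[OF d2, of "{0<..}"])
       (use h in \<open>auto simp: homogeneous_def\<close>)
  show ?thesis using DERIV_unique[OF d1 d3] by (simp add: mult.commute)
qed

definition FF :: "real \<Rightarrow> (real \<Rightarrow> real) \<Rightarrow> real \<Rightarrow> real" where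
  "FF p f s = s * f s / (p + 1)"

lemma FF_deriv:
  assumes p: "p > 1" and h: "homogeneous p f" and d: "\<And>x. (f has_real_derivative f1 x) (at x)"
  shows "(FF p f has_real_derivative f s) (at s)"
proof -
  have "(FF p f has_real_derivative (f s + s * f1 s) / (p + 1)) (at s)"
    unfolding FF_def[abs_def] using d p by (auto intro!: derivative_eq_intros)
  also have "(f s + s * f1 s) / (p + 1) = f s" using euler[OF p h d, of s] p by (simp add: field_simps)
  finally show ?thesis .
qed

lemma FF_nonneg:
  assumes p: "p > 1" and h: "homogeneous p f" and d: "\<And>x. (f has_real_derivative f1 x) (at x)"
    and F: "\<forall>u. (LBINT s=ereal 0..ereal u. f s) \<ge> 0"
  shows "FF p f u \<ge> 0"
proof -
  have cf: "continuous_on UNIV f" by (meson DERIV_isCont continuous_at_imp_continuous_on d)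
  have "(LBINT s=ereal 0..ereal u. f s) = FF p f u - FF p f 0"
    by (rule interval_integral_FTC_finite)
       (auto intro: continuous_on_subset[OF cf] has_field_derivative_at_within FF_deriv[OF p h d]
             simp: has_real_derivative_iff_has_vector_derivative[symmetric])
  then show ?thesis using F[rule_format, of u] by (simp add: FF_def)
qed

lemma zero_sq:
  fixes g :: "real \<Rightarrow> real"
  assumes cg: "continuous_on UNIV g" and ig: "integrable lborel (\<lambda>x. (g x)\<^sup>2)"
    and z: "(LINT x|lborel. (g x)\<^sup>2) = 0"
  shows "g x0 = 0"
proof (rule ccontr)
  assume ne: "g x0 \<noteq> 0"
  define m where "m = \<bar>g x0\<bar> / 2"
  have m: "m > 0" using ne by (simp add: m_def)
  have "isCont g x0" using cg by (simp add: continuous_on_eq_continuous_at)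
  then obtain d where d: "d > 0" and dd: "\<And>y. dist y x0 < d \<Longrightarrow> dist (g y) (g x0) < m"
    unfolding continuous_at_eps_delta using m by blast
  have low: "m\<^sup>2 \<le> (g y)\<^sup>2" if "y \<in> {x0 - d/2..x0 + d/2}" for y
  proof -
    have "dist y x0 < d" using that d by (auto simp: dist_real_def)
    then have "\<bar>g y - g x0\<bar> < m" using dd by (simp add: dist_real_def)
    then have "\<bar>g y\<bar> \<ge> m" unfolding m_def by linarith
    then show ?thesis using m by (metis abs_ge_zero abs_of_pos power2_abs power_mono)
  qed
  have "d * m\<^sup>2 = (LINT x|lborel. indicator {x0 - d/2..x0 + d/2} x * m\<^sup>2)"
    using d by simp
  also have "\<dots> \<le> (LINT x|lborel. (g x)\<^sup>2)"
  proof (rule integral_mono)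
    show "integrable lborel (\<lambda>x. indicator {x0 - d/2..x0 + d/2} x * m\<^sup>2)"
      using integrable_indicator_iff[of lborel "{x0 - d/2..x0 + d/2}"] d
      by (intro integrable_mult_left) (simp add: emeasure_lborel_Icc_eq)
    show "integrable lborel (\<lambda>x. (g x)\<^sup>2)" by (rule ig)
    fix x show "indicator {x0 - d/2..x0 + d/2} x * m\<^sup>2 \<le> (g x)\<^sup>2"
      using low[of x] by (auto simp: indicator_def)
  qed
  finally have "d * m\<^sup>2 \<le> 0" using z by simp
  moreover have "d * m\<^sup>2 > 0" using d m by simp
  ultimately show False by simp
qed

lemma const_sq:
  fixes g :: "real \<Rightarrow> real"
  assumes k: "\<And>x. g x = k" and ig: "integrable lborel (\<lambda>x. (g x)\<^sup>2)"
  shows "k = 0"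
proof (rule ccontr)
  assume "k \<noteq> 0"
  then have kp: "k\<^sup>2 > 0" by simp
  obtain n :: nat where n: "(LINT x|lborel. (g x)\<^sup>2) < real n * k\<^sup>2"
    using reals_Archimedean3[OF kp] by blast
  have "real n * k\<^sup>2 = (LINT x|lborel. indicator {0..real n} x * k\<^sup>2)" by simp
  also have "\<dots> \<le> (LINT x|lborel. (g x)\<^sup>2)"
  proof (rule integral_mono)
    show "integrable lborel (\<lambda>x. indicator {0..real n} x * k\<^sup>2)"
      using integrable_indicator_iff[of lborel "{0..real n}"]
      by (intro integrable_mult_left) (simp add: emeasure_lborel_Icc_eq)
    show "integrable lborel (\<lambda>x. (g x)\<^sup>2)" by (rule ig)
    fix x show "indicator {0..real n} x * k\<^sup>2 \<le> (g x)\<^sup>2" using k[of x] kp by (auto simp: indicator_def)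
  qed
  finally show False using n by simp
qed

lemma classical:
  fixes P P1 P2 P3 f f1 :: "real \<Rightarrow> real" and a \<beta> p :: real
  assumes d1: "\<And>x. (P has_real_derivative P1 x) (at x)"
    and d2: "\<And>x. (P1 has_real_derivative P2 x) (at x)"
    and d3: "\<And>x. (P2 has_real_derivative P3 x) (at x)"
    and d4: "\<And>x. (P3 has_real_derivative (a * P x - \<beta> * P2 x + f (P x))) (at x)"
    and LP: "L2 P" and LP1: "L2 P1" and LP2: "L2 P2"
    and p: "p > 1" and h: "homogeneous p f" and df: "\<And>x. (f has_real_derivative f1 x) (at x)"
  shows "(LINT x|lborel. (P2 x)\<^sup>2) - \<beta> * (LINT x|lborel. (P1 x)\<^sup>2) - a * (LINT x|lborel. (P x)\<^sup>2)
           - (p + 1) * (LINT x|lborel. FF p f (P x)) = 0"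
    and "3/2 * (LINT x|lborel. (P2 x)\<^sup>2) - \<beta>/2 * (LINT x|lborel. (P1 x)\<^sup>2) + a/2 * (LINT x|lborel. (P x)\<^sup>2)
           + (LINT x|lborel. FF p f (P x)) = 0"
    and "\<And>t. t > 0 \<Longrightarrow> 2 * (LINT x|lborel. (P1 x)\<^sup>2) \<le> t * (LINT x|lborel. (P2 x)\<^sup>2) + (LINT x|lborel. (P x)\<^sup>2) / t"
proof -
  have cP: "continuous_on UNIV P" by (meson DERIV_isCont continuous_at_imp_continuous_on d1)
  have cP1: "continuous_on UNIV P1" by (meson DERIV_isCont continuous_at_imp_continuous_on d2)
  have cP2: "continuous_on UNIV P2" by (meson DERIV_isCont continuous_at_imp_continuous_on d3)
  have cP3: "continuous_on UNIV P3" by (meson DERIV_isCont continuous_at_imp_continuous_on d4)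
  have cf: "continuous_on UNIV f" by (meson DERIV_isCont continuous_at_imp_continuous_on df)
  have cfP: "continuous_on UNIV (\<lambda>x. f (P x))" by (rule continuous_on_compose2[OF cf cP]) auto
  have dFF: "((\<lambda>x. FF p f (P x)) has_real_derivative f (P x) * P1 x) (at x)" for x
    by (rule DERIV_chain2[OF FF_deriv[OF p h df] d1])
  have cFF: "continuous_on UNIV (\<lambda>x. FF p f (P x))" by (intro continuous_at_imp_continuous_on ballI DERIV_isCont[OF dFF])
  have [measurable]: "P \<in> borel_measurable borel" "P1 \<in> borel_measurable borel" "P2 \<in> borel_measurable borel"
    "(\<lambda>x. f (P x)) \<in> borel_measurable borel" "(\<lambda>x. FF p f (P x)) \<in> borel_measurable borel"
    using cP cP1 cP2 cfP cFF by (auto intro: borel_measurable_continuous_onI)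
  obtain B0 where B0: "\<And>x. \<bar>P x\<bar> \<le> B0" using L2_bounded[OF d1 cP1 LP LP1] by blast
  define K0 where "K0 = (\<bar>f 1\<bar> + \<bar>f (-1)\<bar>) * B0 powr (p - 1)"
  have fb: "\<bar>f (P x)\<bar> \<le> K0 * \<bar>P x\<bar>" for x unfolding K0_def by (rule hom_lin_bound[OF p h B0])
  have iA: "integrable lborel (\<lambda>x. (P2 x)\<^sup>2)" and iB: "integrable lborel (\<lambda>x. (P1 x)\<^sup>2)"
    and iC: "integrable lborel (\<lambda>x. (P x)\<^sup>2)" using LP LP1 LP2 by (auto simp: L2_def)
  have i01: "integrable lborel (\<lambda>x. P x * P1 x)" by (rule L2_prod[OF LP LP1])
  have i02: "integrable lborel (\<lambda>x. P x * P2 x)" by (rule L2_prod[OF LP LP2])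
  have i12: "integrable lborel (\<lambda>x. P1 x * P2 x)" by (rule L2_prod[OF LP1 LP2])
  have iPf: "integrable lborel (\<lambda>x. P x * f (P x))"
  proof (rule Bochner_Integration.integrable_bound[OF integrable_mult_right[OF iC, of K0]])
    show "AE x in lborel. norm (P x * f (P x)) \<le> norm (K0 * (P x)\<^sup>2)"
    proof (rule AE_I2)
      fix x
      have "\<bar>P x * f (P x)\<bar> \<le> \<bar>P x\<bar> * (K0 * \<bar>P x\<bar>)" unfolding abs_mult by (rule mult_left_mono[OF fb]) simp
      also have "\<dots> = K0 * (P x)\<^sup>2" by (simp add: power2_eq_square abs_mult_self_eq)
      also have "\<dots> \<le> \<bar>K0 * (P x)\<^sup>2\<bar>" by simp
      finally show "norm (P x * f (P x)) \<le> norm (K0 * (P x)\<^sup>2)" by simp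
    qed
  qed measurable
  have FFe: "FF p f (P x) = P x * f (P x) / (p + 1)" for x by (simp add: FF_def)
  have iG: "integrable lborel (\<lambda>x. FF p f (P x))" unfolding FFe using iPf by simp
  have Ge: "(LINT x|lborel. P x * f (P x)) = (p + 1) * (LINT x|lborel. FF p f (P x))"
    unfolding FFe using p by simp
  define T where "T x = P1 x * P3 x - (P2 x)\<^sup>2 / 2 + \<beta> / 2 * (P1 x)\<^sup>2 - a / 2 * (P x)\<^sup>2 - FF p f (P x)" for x
  have dT: "(T has_real_derivative 0) (at x)" for x
  proof -
    have "(T has_real_derivative (P2 x * P3 x + P1 x * (a * P x - \<beta> * P2 x + f (P x)) - P2 x * P3 x
        + \<beta> * (P1 x * P2 x) - a * (P x * P1 x) - f (P x) * P1 x)) (at x)"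
      unfolding T_def[abs_def]
      by (rule derivative_eq_intros d1 d2 d3 d4 dFF refl | simp add: power2_eq_square)+
    moreover have "P2 x * P3 x + P1 x * (a * P x - \<beta> * P2 x + f (P x)) - P2 x * P3 x
        + \<beta> * (P1 x * P2 x) - a * (P x * P1 x) - f (P x) * P1 x = 0" by (simp add: algebra_simps)
    ultimately show ?thesis by simp
  qed
  have Tc: "T x = T 0" for x using dT by (intro DERIV_isconst_all) auto
  have T0: "T 0 = 0"
  proof (rule core_const[of "\<lambda>x. P1 x * P2 x" "\<lambda>x. P2 x * P2 x + P1 x * P3 x"
        "\<lambda>x. - 3/2 * (P2 x)\<^sup>2 + \<beta> / 2 * (P1 x)\<^sup>2 - a / 2 * (P x)\<^sup>2 - FF p f (P x)"])
    show "((\<lambda>x. P1 x * P2 x) has_real_derivative P2 x * P2 x + P1 x * P3 x) (at x)" for x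
      using d2[of x] d3[of x] by (auto intro!: derivative_eq_intros)
    show "continuous_on UNIV (\<lambda>x. - 3/2 * (P2 x)\<^sup>2 + \<beta> / 2 * (P1 x)\<^sup>2 - a / 2 * (P x)\<^sup>2 - FF p f (P x))"
      by (intro continuous_intros cP cP1 cP2 cFF)
    show "integrable lborel (\<lambda>x. P1 x * P2 x)" by (rule i12)
    show "integrable lborel (\<lambda>x. - 3/2 * (P2 x)\<^sup>2 + \<beta> / 2 * (P1 x)\<^sup>2 - a / 2 * (P x)\<^sup>2 - FF p f (P x))"
      using iA iB iC iG by auto
    show "P2 x * P2 x + P1 x * P3 x + (- 3/2 * (P2 x)\<^sup>2 + \<beta> / 2 * (P1 x)\<^sup>2 - a / 2 * (P x)\<^sup>2 - FF p f (P x)) = T 0" for x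
      using Tc[of x] by (simp add: T_def power2_eq_square algebra_simps)
  qed
  have Tz: "P1 x * P3 x = (P2 x)\<^sup>2 / 2 - \<beta> / 2 * (P1 x)\<^sup>2 + a / 2 * (P x)\<^sup>2 + FF p f (P x)" for x
    using Tc[of x] T0 by (simp add: T_def algebra_simps)
  have I1: "(LINT x|lborel. a * (P x)\<^sup>2 + P x * f (P x) - (P2 x)\<^sup>2 + \<beta> * (P1 x)\<^sup>2) = 0"
  proof (rule GL[of "\<lambda>x. P x * P3 x - P1 x * P2 x + \<beta> * (P x * P1 x)" _ "\<lambda>x. P x * P2 x"
        "\<lambda>x. P1 x * P2 x + P x * P3 x" "\<lambda>x. - 2 * (P1 x * P2 x) + \<beta> * (P x * P1 x)"])
    show "((\<lambda>x. P x * P3 x - P1 x * P2 x + \<beta> * (P x * P1 x)) has_real_derivative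
        a * (P x)\<^sup>2 + P x * f (P x) - (P2 x)\<^sup>2 + \<beta> * (P1 x)\<^sup>2) (at x)" for x
    proof -
      have "((\<lambda>x. P x * P3 x - P1 x * P2 x + \<beta> * (P x * P1 x)) has_real_derivative
        P1 x * P3 x + P x * (a * P x - \<beta> * P2 x + f (P x)) - (P2 x * P2 x + P1 x * P3 x) + \<beta> * (P1 x * P1 x + P x * P2 x)) (at x)"
        using d1[of x] d2[of x] d3[of x] d4[of x] by (auto intro!: derivative_eq_intros)
      then show ?thesis by (simp add: power2_eq_square algebra_simps)
    qed
    show "continuous_on UNIV (\<lambda>x. a * (P x)\<^sup>2 + P x * f (P x) - (P2 x)\<^sup>2 + \<beta> * (P1 x)\<^sup>2)"
      by (intro continuous_intros cP cP1 cP2 cfP)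
    show "integrable lborel (\<lambda>x. a * (P x)\<^sup>2 + P x * f (P x) - (P2 x)\<^sup>2 + \<beta> * (P1 x)\<^sup>2)"
      using iA iB iC iPf by auto
    show "((\<lambda>x. P x * P2 x) has_real_derivative P1 x * P2 x + P x * P3 x) (at x)" for x
      using d1[of x] d3[of x] by (auto intro!: derivative_eq_intros)
    show "P x * P3 x - P1 x * P2 x + \<beta> * (P x * P1 x) = P1 x * P2 x + P x * P3 x + (- 2 * (P1 x * P2 x) + \<beta> * (P x * P1 x))" for x
      by (simp add: algebra_simps)
    show "integrable lborel (\<lambda>x. P x * P2 x)" by (rule i02)
    show "integrable lborel (\<lambda>x. - 2 * (P1 x * P2 x) + \<beta> * (P x * P1 x))" using i12 i01 by auto
    show "continuous_on UNIV (\<lambda>x. - 2 * (P1 x * P2 x) + \<beta> * (P x * P1 x))"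
      by (intro continuous_intros cP cP1 cP2)
  qed
  have Q2e: "P2 x * P2 x + P1 x * P3 x = 3/2 * (P2 x)\<^sup>2 - \<beta>/2 * (P1 x)\<^sup>2 + a/2 * (P x)\<^sup>2 + FF p f (P x)" for x
    using Tz[of x] by (simp add: power2_eq_square algebra_simps)
  have I2: "(LINT x|lborel. P2 x * P2 x + P1 x * P3 x) = 0"
  proof (rule GL[of "\<lambda>x. P1 x * P2 x" _ "\<lambda>x. (P1 x)\<^sup>2 / 2" "\<lambda>x. P1 x * P2 x" "\<lambda>x. 0"])
    show "((\<lambda>x. P1 x * P2 x) has_real_derivative P2 x * P2 x + P1 x * P3 x) (at x)" for x
      using d2[of x] d3[of x] by (auto intro!: derivative_eq_intros)
    show "continuous_on UNIV (\<lambda>x. P2 x * P2 x + P1 x * P3 x)"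
      by (intro continuous_intros cP1 cP2 cP3)
    show "integrable lborel (\<lambda>x. P2 x * P2 x + P1 x * P3 x)"
      unfolding Q2e using iA iB iC iG by auto
    show "((\<lambda>x. (P1 x)\<^sup>2 / 2) has_real_derivative P1 x * P2 x) (at x)" for x
      using d2[of x] by (auto intro!: derivative_eq_intros)
    show "integrable lborel (\<lambda>x. (P1 x)\<^sup>2 / 2)" using iB by simp
  qed auto
  have I3: "(LINT x|lborel. (P1 x)\<^sup>2 + P x * P2 x) = 0"
  proof (rule GL[of "\<lambda>x. P x * P1 x" _ "\<lambda>x. (P x)\<^sup>2 / 2" "\<lambda>x. P x * P1 x" "\<lambda>x. 0"])
    show "((\<lambda>x. P x * P1 x) has_real_derivative (P1 x)\<^sup>2 + P x * P2 x) (at x)" for x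
      using d1[of x] d2[of x] by (auto intro!: derivative_eq_intros simp: power2_eq_square)
    show "continuous_on UNIV (\<lambda>x. (P1 x)\<^sup>2 + P x * P2 x)"
      by (intro continuous_intros cP cP1 cP2)
    show "integrable lborel (\<lambda>x. (P1 x)\<^sup>2 + P x * P2 x)" using iB i02 by auto
    show "((\<lambda>x. (P x)\<^sup>2 / 2) has_real_derivative P x * P1 x) (at x)" for x
      using d1[of x] by (auto intro!: derivative_eq_intros)
    show "integrable lborel (\<lambda>x. (P x)\<^sup>2 / 2)" using iC by simp
  qed auto
  have I1': "a * (LINT x|lborel. (P x)\<^sup>2) + (LINT x|lborel. P x * f (P x)) - (LINT x|lborel. (P2 x)\<^sup>2) + \<beta> * (LINT x|lborel. (P1 x)\<^sup>2) = 0"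
    using I1 iA iB iC iPf by simp
  show "(LINT x|lborel. (P2 x)\<^sup>2) - \<beta> * (LINT x|lborel. (P1 x)\<^sup>2) - a * (LINT x|lborel. (P x)\<^sup>2)
           - (p + 1) * (LINT x|lborel. FF p f (P x)) = 0"
    using I1' Ge by simp
  have "(LINT x|lborel. P2 x * P2 x + P1 x * P3 x) = (LINT x|lborel. 3/2 * (P2 x)\<^sup>2 - \<beta>/2 * (P1 x)\<^sup>2 + a/2 * (P x)\<^sup>2 + FF p f (P x))"
    unfolding Q2e ..
  also have "\<dots> = 3/2 * (LINT x|lborel. (P2 x)\<^sup>2) - \<beta>/2 * (LINT x|lborel. (P1 x)\<^sup>2) + a/2 * (LINT x|lborel. (P x)\<^sup>2)
           + (LINT x|lborel. FF p f (P x))"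
    using iA iB iC iG by simp
  finally show "3/2 * (LINT x|lborel. (P2 x)\<^sup>2) - \<beta>/2 * (LINT x|lborel. (P1 x)\<^sup>2) + a/2 * (LINT x|lborel. (P x)\<^sup>2)
           + (LINT x|lborel. FF p f (P x)) = 0" using I2 by simp
  have I3': "(LINT x|lborel. (P1 x)\<^sup>2) = - (LINT x|lborel. P x * P2 x)"
    using I3 iB i02 by simp
  fix t :: real assume t: "t > 0"
  have "- 2 * (LINT x|lborel. P x * P2 x) = (LINT x|lborel. - 2 * (P x * P2 x))" by simp
  also have "\<dots> \<le> (LINT x|lborel. t * (P2 x)\<^sup>2 + (P x)\<^sup>2 / t)"
  proof (rule integral_mono)
    show "integrable lborel (\<lambda>x. - 2 * (P x * P2 x))" using i02 by simp
    show "integrable lborel (\<lambda>x. t * (P2 x)\<^sup>2 + (P x)\<^sup>2 / t)" using iA iC by simp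
    fix x
    have "0 \<le> (t * P2 x + P x)\<^sup>2 / t" using t by simp
    also have "(t * P2 x + P x)\<^sup>2 / t = t * (P2 x)\<^sup>2 + (P x)\<^sup>2 / t + 2 * (P x * P2 x)"
      using t by (simp add: power2_eq_square field_simps)
    finally show "- 2 * (P x * P2 x) \<le> t * (P2 x)\<^sup>2 + (P x)\<^sup>2 / t" by simp
  qed
  also have "\<dots> = t * (LINT x|lborel. (P2 x)\<^sup>2) + (LINT x|lborel. (P x)\<^sup>2) / t" using iA iC by simp
  finally show "2 * (LINT x|lborel. (P1 x)\<^sup>2) \<le> t * (LINT x|lborel. (P2 x)\<^sup>2) + (LINT x|lborel. (P x)\<^sup>2) / t"
    using I3' by simp
qed

theorem mainTheorem2:
  fixes p c \<beta> :: real and f :: "real \<Rightarrow> real"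
  assumes "p > 1"
    and "C2 f"
    and "homogeneous p f"
    and "(c\<^sup>2 \<ge> 1 \<and> \<beta> < 2 * sqrt ((3 * p + 5) * (p - 1) * (c\<^sup>2 - 1)) / (p + 3))
         \<or> ((\<forall>u. (LBINT s=ereal 0..ereal u. f s) \<ge> 0) \<and> c\<^sup>2 \<ge> 1 \<and> \<beta> \<ge> 0)"
  shows "\<not> (\<exists>\<phi>. H2 \<phi> \<and> weak_solution c \<beta> f \<phi> \<and> \<not> (AE x in lborel. \<phi> x = 0))"
proof
  assume "\<exists>\<phi>. H2 \<phi> \<and> weak_solution c \<beta> f \<phi> \<and> \<not> (AE x in lborel. \<phi> x = 0)"
  then obtain \<phi> where H: "H2 \<phi>" and W: "weak_solution c \<beta> f \<phi>" and nz: "\<not> (AE x in lborel. \<phi> x = 0)"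
    by blast
  have p: "p > 1" and h: "homogeneous p f" using assms by auto
  obtain f1 where df: "\<And>x. (f has_real_derivative f1 x) (at x)"
    using assms(2) unfolding C2_def by blast
  have cf: "continuous_on UNIV f" by (meson DERIV_isCont continuous_at_imp_continuous_on df)
  obtain P P1 P2 P3 where d1: "\<And>x. (P has_real_derivative P1 x) (at x)"
    and d2: "\<And>x. (P1 has_real_derivative P2 x) (at x)"
    and d3: "\<And>x. (P2 has_real_derivative P3 x) (at x)"
    and d4: "\<And>x. (P3 has_real_derivative ((c\<^sup>2 - 1) * P x - \<beta> * P2 x + f (P x))) (at x)"
    and ae: "AE x in lborel. \<phi> x = P x" and LP: "L2 P" and LP1: "L2 P1" and LP2: "L2 P2"
    using regularity[OF H W cf] by blast
  define a where "a = c\<^sup>2 - 1"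
  have a0: "a \<ge> 0" using assms(4) by (auto simp: a_def)
  define A where "A = (LINT x|lborel. (P2 x)\<^sup>2)"
  define B where "B = (LINT x|lborel. (P1 x)\<^sup>2)"
  define C where "C = (LINT x|lborel. (P x)\<^sup>2)"
  define G where "G = (LINT x|lborel. FF p f (P x))"
  note cl = classical[OF d1 d2 d3 d4 LP LP1 LP2 p h df, folded a_def A_def B_def C_def G_def]
  have E1: "A - \<beta> * B - a * C - (p + 1) * G = 0" using cl(1) .
  have E2: "3/2 * A - \<beta>/2 * B + a/2 * C + G = 0" using cl(2) .
  have AM: "\<And>t. t > 0 \<Longrightarrow> 2 * B \<le> t * A + C / t" using cl(3) .
  have A0: "A \<ge> 0" "B \<ge> 0" "C \<ge> 0" unfolding A_def B_def C_def by (auto intro!: integral_nonneg_AE)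
  have cP: "continuous_on UNIV P" by (meson DERIV_isCont continuous_at_imp_continuous_on d1)
  have cP1: "continuous_on UNIV P1" by (meson DERIV_isCont continuous_at_imp_continuous_on d2)
  have cP2: "continuous_on UNIV P2" by (meson DERIV_isCont continuous_at_imp_continuous_on d3)
  have Bz: False if "B = 0"
  proof -
    have z1: "P1 x = 0" for x by (rule zero_sq[OF cP1 L2_sq[OF LP1]]) (use that in \<open>simp add: B_def\<close>)
    have "P x = P 0" for x by (rule DERIV_isconst_all) (use d1 z1 in auto)
    then have "P 0 = 0" using const_sq[of P "P 0"] L2_sq[OF LP] by blast
    then have "P x = 0" for x using \<open>\<And>x. P x = P 0\<close> by simp
    then have "AE x in lborel. \<phi> x = 0" using ae by simp
    then show False using nz by simp
  qed
  have Az: "B = 0" if "A = 0"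
  proof -
    have z2: "P2 x = 0" for x by (rule zero_sq[OF cP2 L2_sq[OF LP2]]) (use that in \<open>simp add: A_def\<close>)
    have "P1 x = P1 0" for x by (rule DERIV_isconst_all) (use d2 z2 in auto)
    then have "P1 0 = 0" using const_sq[of P1 "P1 0"] L2_sq[OF LP1] by blast
    then have "P1 x = 0" for x using \<open>\<And>x. P1 x = P1 0\<close> by simp
    then show "B = 0" by (simp add: B_def)
  qed
  from assms(4) show False
  proof
    assume i: "c\<^sup>2 \<ge> 1 \<and> \<beta> < 2 * sqrt ((3 * p + 5) * (p - 1) * (c\<^sup>2 - 1)) / (p + 3)"
    have comb: "(3 * p + 5) * A - (p + 3) * \<beta> * B + (p - 1) * a * C = 0"
    proof -
      have "2 * (A - \<beta> * B - a * C - (p + 1) * G) + 2 * (p + 1) * (3/2 * A - \<beta>/2 * B + a/2 * C + G) = 0"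
        using E1 E2 by simp
      then show ?thesis by (simp add: algebra_simps field_simps)
    qed
    have "B > 0" using A0 Bz by force
    show False
    proof (cases "a = 0")
      case True
      then have "\<beta> < 0" using i p by (simp add: a_def)
      then have "(p + 3) * \<beta> * B < 0" using \<open>B > 0\<close> p by (simp add: mult_pos_neg mult_neg_pos)
      then show False using comb A0 True p by (smt (verit) mult_nonneg_nonneg)
    next
      case False
      then have ap: "a > 0" using a0 by simp
      define \<kappa> where "\<kappa> = sqrt ((3 * p + 5) * (p - 1) * a)"
      have pos: "(3 * p + 5) * (p - 1) * a > 0" using p ap by simp
      have kp: "\<kappa> > 0" using pos by (simp add: \<kappa>_def)
      have k2: "\<kappa>\<^sup>2 = (3 * p + 5) * (p - 1) * a" using pos by (simp add: \<kappa>_def)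
      define t where "t = \<kappa> / ((p - 1) * a)"
      have tp: "t > 0" using kp p ap by (simp add: t_def)
      have kt: "\<kappa> * t = 3 * p + 5" using k2 p ap by (simp add: t_def power2_eq_square field_simps)
      have kt2: "\<kappa> / t = (p - 1) * a" using kp p ap by (simp add: t_def field_simps)
      have "\<kappa> * (2 * B) \<le> \<kappa> * (t * A + C / t)" using AM[OF tp] kp by simp
      also have "\<dots> = (\<kappa> * t) * A + (\<kappa> / t) * C" by (simp add: algebra_simps)
      also have "\<dots> = (3 * p + 5) * A + (p - 1) * a * C" using kt kt2 by simp
      also have "\<dots> = (p + 3) * \<beta> * B" using comb by simp
      finally have "2 * \<kappa> * B \<le> (p + 3) * \<beta> * B" by simp
      then have "2 * \<kappa> \<le> (p + 3) * \<beta>" using \<open>B > 0\<close> by (simp add: mult_le_cancel_right)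
      then have "2 * \<kappa> / (p + 3) \<le> \<beta>" using p by (simp add: field_simps)
      then show False using i by (simp add: \<kappa>_def a_def)
    qed
  next
    assume ii: "(\<forall>u. (LBINT s=ereal 0..ereal u. f s) \<ge> 0) \<and> c\<^sup>2 \<ge> 1 \<and> \<beta> \<ge> 0"
    have G0: "G \<ge> 0" unfolding G_def
      using FF_nonneg[OF p h df] ii by (intro integral_nonneg_AE) auto
    have "2 * A + 2 * a * C + (p + 3) * G = 0"
    proof -
      have "2 * (3/2 * A - \<beta>/2 * B + a/2 * C + G) - (A - \<beta> * B - a * C - (p + 1) * G) = 0"
        using E1 E2 by simp
      then show ?thesis by (simp add: algebra_simps)
    qed
    moreover have "a * C \<ge> 0" "(p + 3) * G \<ge> 0" using a0 A0 G0 p by auto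
    ultimately have "A = 0" using A0 by linarith
    then show False using Az Bz by blast
  qed
qed

end
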